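(* For every $\tau\in\mathbb C$ and every VK parameters $\alpha,\beta,\gamma$, as formal power series in $t$, $$1+\sum_{k\ge1}\epsilon_{\alpha,\beta,\gamma}(\pi_\tau g_k)\,t^k=e^{\gamma\theta\tau t}\prod_{i=1}^\infty\frac{1+\theta\beta_i(\tau-\theta\beta_i)t}{(1-\alpha_i(\tau+\alpha_i)t)^{\theta}}.$$
   Context: Fix $\theta>0$. $\Lambda$ is the algebra of symmetric functions in $x_1,x_2,\dots$; $g_k\in\Lambda$ are defined by $1+\sum_{k\ge1}g_kt^k=\prod_j(1-x_jt)^{-\theta}$. VK parameters: $\alpha_1\ge\alpha_2\ge\dots\ge0$, $\beta_1\ge\beta_2\ge\dots\ge0$, $\gamma\ge0$, $\sum(\alpha_i+\beta_i)<\infty$. $\epsilon_{\alpha,\beta,\gamma}:\Lambda\to\mathbb C$ is the algebra homomorphism with $1+\sum_k\epsilon_{\alpha,\beta,\gamma}(g_k)t^k=e^{\gamma\theta t}\prod_i\frac{1+\beta_i\theta t}{(1-\alpha_it)^\theta}$. For $\tau\in\mathbb C$, $\pi_\tau:\Lambda\to\Lambda$ is the homomorphism $(\pi_\tau f)(x_1,x_2,\dots)=f(x_1(x_1+\tau),x_2(x_2+\tau),\dots)$. *)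

theory Defs
  imports Complex_Main "HOL-Library.Poly_Mapping" "HOL-Computational_Algebra.Formal_Power_Series"
begin

text \<open>A formal power series in countably many variables x_0, x_1, ... with complex
coefficients: the coefficient of the monomial x^a, a a finitely supported exponent vector.\<close>
type_synonym sfun = "(nat \<Rightarrow>\<^sub>0 nat) \<Rightarrow> complex"

definition mdeg :: "(nat \<Rightarrow>\<^sub>0 nat) \<Rightarrow> nat" where
  "mdeg a = (\<Sum>j\<in>Poly_Mapping.keys a. Poly_Mapping.lookup a j)"

definition sf_symmetric :: "sfun \<Rightarrow> bool" where
  "sf_symmetric f \<longleftrightarrow>
     (\<forall>a b (\<sigma>::nat \<Rightarrow> nat). bij \<sigma> \<longrightarrow> (\<forall>j. Poly_Mapping.lookup b j = Poly_Mapping.lookup a (\<sigma> j)) \<longrightarrow> f b = f a)"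

definition Lam :: "sfun set" where
  "Lam = {f. sf_symmetric f \<and> (\<exists>d. \<forall>a. f a \<noteq> 0 \<longrightarrow> mdeg a \<le> d)}"

definition sf_add :: "sfun \<Rightarrow> sfun \<Rightarrow> sfun" where
  "sf_add f g = (\<lambda>a. f a + g a)"

definition sf_scale :: "complex \<Rightarrow> sfun \<Rightarrow> sfun" where
  "sf_scale c f = (\<lambda>a. c * f a)"

definition sf_mult :: "sfun \<Rightarrow> sfun \<Rightarrow> sfun" where
  "sf_mult f g = (\<lambda>a. \<Sum>b\<in>{b. \<forall>j. Poly_Mapping.lookup b j \<le> Poly_Mapping.lookup a j}. f b * g (a - b))"

definition sf_one :: sfun where
  "sf_one = (\<lambda>a. if a = 0 then 1 else 0)"

definition sf_alg_hom :: "(sfun \<Rightarrow> complex) \<Rightarrow> bool" where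
  "sf_alg_hom E \<longleftrightarrow>
     (\<forall>f\<in>Lam. \<forall>g\<in>Lam. E (sf_add f g) = E f + E g \<and> E (sf_mult f g) = E f * E g) \<and>
     (\<forall>c. \<forall>f\<in>Lam. E (sf_scale c f) = c * E f) \<and> E sf_one = 1"

text \<open>g_k: coefficient of t^k in prod_j (1 - x_j t)^(-theta), expanded:
  (1 - x t)^(-theta) = sum_n (theta)_n / n! x^n t^n.\<close>
definition gk :: "real \<Rightarrow> nat \<Rightarrow> sfun" where
  "gk \<theta> k = (\<lambda>a. if mdeg a = k
      then (\<Prod>j\<in>Poly_Mapping.keys a. pochhammer (complex_of_real \<theta>) (Poly_Mapping.lookup a j) / fact (Poly_Mapping.lookup a j))
      else 0)"

text \<open>pi_tau: substitution x_j := x_j (x_j + tau); coefficientwise,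
  x^b |-> prod_j sum_m (b_j choose m) tau^(b_j - m) x_j^(b_j + m).\<close>
definition pi_tau :: "complex \<Rightarrow> sfun \<Rightarrow> sfun" where
  "pi_tau \<tau> f = (\<lambda>a. \<Sum>b\<in>{b. \<forall>j. Poly_Mapping.lookup b j \<le> Poly_Mapping.lookup a j}.
      f b * (\<Prod>j\<in>Poly_Mapping.keys a. of_nat (Poly_Mapping.lookup b j choose (Poly_Mapping.lookup a j - Poly_Mapping.lookup b j))
                            * \<tau> ^ (2 * Poly_Mapping.lookup b j - Poly_Mapping.lookup a j)))"

definition fps_one_minus_pow :: "complex \<Rightarrow> complex \<Rightarrow> complex fps" where
  "fps_one_minus_pow d s = fps_binomial s oo (- fps_const d * fps_X)"

definition fps_infprod_convergent :: "(nat \<Rightarrow> complex fps) \<Rightarrow> bool" where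
  "fps_infprod_convergent F \<longleftrightarrow> (\<forall>n. convergent (\<lambda>N. fps_nth (\<Prod>i<N. F i) n))"

definition fps_infprod :: "(nat \<Rightarrow> complex fps) \<Rightarrow> complex fps" where
  "fps_infprod F = Abs_fps (\<lambda>n. lim (\<lambda>N. fps_nth (\<Prod>i<N. F i) n))"

definition VK_params :: "(nat \<Rightarrow> real) \<Rightarrow> (nat \<Rightarrow> real) \<Rightarrow> real \<Rightarrow> bool" where
  "VK_params \<alpha> \<beta> \<gamma> \<longleftrightarrow> antimono \<alpha> \<and> antimono \<beta> \<and> (\<forall>i. \<alpha> i \<ge> 0 \<and> \<beta> i \<ge> 0) \<and>
     \<gamma> \<ge> 0 \<and> summable (\<lambda>i. \<alpha> i + \<beta> i)"

definition is_eps :: "real \<Rightarrow> (nat \<Rightarrow> real) \<Rightarrow> (nat \<Rightarrow> real) \<Rightarrow> real \<Rightarrow> (sfun \<Rightarrow> complex) \<Rightarrow> bool" where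
  "is_eps \<theta> \<alpha> \<beta> \<gamma> E \<longleftrightarrow> sf_alg_hom E \<and>
     Abs_fps (\<lambda>k. if k = 0 then 1 else E (gk \<theta> k)) =
       fps_exp (complex_of_real (\<gamma> * \<theta>)) *
       fps_infprod (\<lambda>i. (1 + fps_const (complex_of_real (\<beta> i * \<theta>)) * fps_X) *
                        fps_one_minus_pow (complex_of_real (\<alpha> i)) (- complex_of_real \<theta>))"

end

theory Submission
  imports Defs "HOL-Library.FuncSet"
begin


notation fps_nth (infixl \<open>$\<close> 75)

lemma ode_unique:
  fixes F G D Q :: "'a::{idom,semiring_char_0} fps"
  assumes D0: "D$0 = 1" and hF: "D * fps_deriv F = Q * F" and hG: "D * fps_deriv G = Q * G"
    and F0: "F$0 = G$0"
  shows "F = G"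
proof -
  define H where "H = F - G"
  have hH: "D * fps_deriv H = Q * H" using hF hG by (simp add: H_def algebra_simps)
  have H0: "H$0 = 0" using F0 by (simp add: H_def)
  have "\<forall>m\<le>n. H$m = 0" for n
  proof (induction n)
    case 0 then show ?case using H0 by simp
  next
    case (Suc n)
    have "(D * fps_deriv H)$n = (\<Sum>i=0..n. D$i * (of_nat (n - i + 1) * H$(n - i + 1)))"
      by (simp add: fps_mult_nth)
    also have "\<dots> = (\<Sum>i\<in>{0}. D$i * (of_nat (n - i + 1) * H$(n - i + 1)))"
      using Suc.IH by (intro sum.mono_neutral_right) auto
    also have "\<dots> = of_nat (n+1) * H$(n+1)" using D0 by simp
    finally have e1: "(D * fps_deriv H)$n = of_nat (n+1) * H$(n+1)" .
    have "(Q * H)$n = 0" using Suc.IH by (simp add: fps_mult_nth)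
    with e1 hH have "of_nat (n+1) * H$(n+1) = 0" by simp
    then have "H$(Suc n) = 0" by (simp del: of_nat_Suc)
    then show ?case using Suc.IH le_Suc_eq by auto
  qed
  then have "H = 0" by (auto simp: fps_eq_iff)
  then show ?thesis by (simp add: H_def)
qed

lemma H_mult:
  fixes H x y :: "'a::{idom,semiring_char_0} fps"
  assumes ode: "(1 - fps_X) * fps_deriv H = fps_const c * H" and H0: "H$0 = 1"
    and x0: "x$0 = 0" and y0: "y$0 = 0"
  shows "(H oo x) * (H oo y) = H oo (x + y - x*y)"
proof -
  have key: "(1 - z) * (fps_deriv H oo z) = fps_const c * (H oo z)" if z0: "z$0 = 0" for z
  proof -
    have "((1 - fps_X) * fps_deriv H) oo z = (fps_const c * H) oo z" using ode by simp
    then show ?thesis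
      by (simp add: fps_compose_mult_distrib[OF z0] fps_compose_sub_distrib
          fps_X_fps_compose_startby0[OF z0])
  qed
  define z where "z = x + y - x*y"
  have z0: "z$0 = 0" using x0 y0 by (simp add: z_def)
  define D where "D = (1 - x) * (1 - y)"
  have Dz: "D = 1 - z" by (simp add: D_def z_def algebra_simps)
  define Q where "Q = fps_const c * (fps_deriv x * (1 - y) + fps_deriv y * (1 - x))"
  have "D * fps_deriv ((H oo x) * (H oo y)) =
        (1 - y) * fps_deriv x * ((1 - x) * (fps_deriv H oo x)) * (H oo y)
        + (1 - x) * fps_deriv y * ((1 - y) * (fps_deriv H oo y)) * (H oo x)"
    by (simp add: D_def fps_compose_deriv[OF x0] fps_compose_deriv[OF y0] algebra_simps)
  also have "\<dots> = Q * ((H oo x) * (H oo y))"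
    unfolding key[OF x0] key[OF y0] by (simp add: Q_def algebra_simps)
  finally have e1: "D * fps_deriv ((H oo x) * (H oo y)) = Q * ((H oo x) * (H oo y))" .
  have "D * fps_deriv (H oo z) = fps_deriv z * ((1 - z) * (fps_deriv H oo z))"
    by (simp add: Dz fps_compose_deriv[OF z0] algebra_simps)
  also have "\<dots> = Q * (H oo z)"
    unfolding key[OF z0] by (simp add: Q_def z_def algebra_simps)
  finally have e2: "D * fps_deriv (H oo z) = Q * (H oo z)" .
  have D0: "D$0 = 1" using x0 y0 by (simp add: D_def fps_mult_nth)
  show ?thesis unfolding z_def[symmetric]
    by (rule ode_unique[OF D0 e1 e2]) (simp add: fps_mult_nth H0)
qed

lemma E_mult:
  fixes x y :: "'a::field_char_0 fps"
  assumes x0: "x$0 = 0" and y0: "y$0 = 0"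
  shows "(fps_exp c oo x) * (fps_exp c oo y) = fps_exp c oo (x + y)"
proof -
  have key: "fps_deriv (fps_exp c oo z) = fps_const c * fps_deriv z * (fps_exp c oo z)" if z0: "z$0 = 0" for z
    by (simp add: fps_compose_deriv[OF z0] fps_compose_mult_distrib[OF z0] algebra_simps)
  have xy0: "(x+y)$0 = 0" using x0 y0 by simp
  define Q where "Q = fps_const c * (fps_deriv x + fps_deriv y)"
  have e1: "1 * fps_deriv ((fps_exp c oo x) * (fps_exp c oo y)) = Q * ((fps_exp c oo x) * (fps_exp c oo y))"
    by (simp add: key[OF x0] key[OF y0] Q_def algebra_simps)
  have e2: "1 * fps_deriv (fps_exp c oo (x+y)) = Q * (fps_exp c oo (x+y))"
    by (simp add: key[OF xy0] Q_def algebra_simps)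
  show ?thesis by (rule ode_unique[OF _ e1 e2]) (simp_all add: fps_mult_nth)
qed


definition wc :: "real \<Rightarrow> nat \<Rightarrow> complex" where
  "wc \<theta> n = pochhammer (complex_of_real \<theta>) n / fact n"

lemma wc_0[simp]: "wc \<theta> 0 = 1" by (simp add: wc_def)

lemma wc_rec: "of_nat (Suc n) * wc \<theta> (Suc n) = (of_real \<theta> + of_nat n) * wc \<theta> n"
proof -
  have "fact (Suc n) = (of_nat (Suc n) :: complex) * fact n" by (simp add: fact_Suc)
  moreover have "(fact n :: complex) \<noteq> 0" by simp
  ultimately show ?thesis
    by (simp add: wc_def pochhammer_rec' field_simps del: of_nat_Suc)
qed

lemma one_minus_X_mult_nth:
  fixes F :: "'a::comm_ring_1 fps"
  shows "((1 - fps_X) * F) $ n = F $ n - (if n = 0 then 0 else F $ (n - 1))"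
proof (cases n)
  case 0 then show ?thesis by (simp add: fps_mult_nth)
next
  case (Suc m)
  have "((1 - fps_X) * F) $ n = F$n - (fps_X * F) $ n" by (simp add: algebra_simps)
  also have "(fps_X * F) $ n = F $ m" using Suc by (simp add: fps_X_mult_nth)
  finally show ?thesis using Suc by simp
qed

definition Hw :: "real \<Rightarrow> complex fps" where "Hw \<theta> = Abs_fps (wc \<theta>)"
definition HR :: "real \<Rightarrow> complex fps fps" where "HR \<theta> = Abs_fps (\<lambda>n. fps_const (wc \<theta> n))"

lemma wc_rec2: "of_nat (Suc n) * wc \<theta> (Suc n) - of_nat n * wc \<theta> n = of_real \<theta> * wc \<theta> n"
  using wc_rec[of n \<theta>] by (simp add: algebra_simps del: of_nat_Suc)

lemma Hw_ode: "(1 - fps_X) * fps_deriv (Hw \<theta>) = fps_const (of_real \<theta>) * Hw \<theta>"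
proof (rule fps_ext)
  fix n
  show "((1 - fps_X) * fps_deriv (Hw \<theta>)) $ n = (fps_const (of_real \<theta>) * Hw \<theta>) $ n"
  proof (cases n)
    case 0 then show ?thesis using wc_rec[of 0 \<theta>] by (simp add: one_minus_X_mult_nth Hw_def)
  next
    case (Suc m) then show ?thesis using wc_rec2[of n \<theta>]
      by (simp add: one_minus_X_mult_nth Hw_def algebra_simps del: of_nat_Suc)
  qed
qed

lemma HR_ode: "(1 - fps_X) * fps_deriv (HR \<theta>) = fps_const (fps_const (of_real \<theta>)) * HR \<theta>"
proof (rule fps_ext)
  fix n
  have e0: "of_nat (Suc n) * wc \<theta> (Suc n) = of_real \<theta> * wc \<theta> n + of_nat n * wc \<theta> n"
    using wc_rec2[of n \<theta>] by (simp add: algebra_simps del: of_nat_Suc)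
  have e: "fps_const (of_nat (Suc n)) * fps_const (wc \<theta> (Suc n)) = fps_const (of_real \<theta>) * fps_const (wc \<theta> n) + fps_const (of_nat n) * fps_const (wc \<theta> n)"
    unfolding fps_const_mult fps_const_add e0 ..
  show "((1 - fps_X) * fps_deriv (HR \<theta>)) $ n = (fps_const (fps_const (of_real \<theta>)) * HR \<theta>) $ n"
  proof (cases n)
    case 0 then show ?thesis using wc_rec[of 0 \<theta>]
      by (simp add: one_minus_X_mult_nth HR_def fps_of_nat[symmetric] fps_const_mult[symmetric] del: fps_const_mult)
  next
    case (Suc m) then show ?thesis using e
      by (simp add: one_minus_X_mult_nth HR_def fps_of_nat[symmetric] fps_const_mult[symmetric] algebra_simps
          del: of_nat_Suc fps_const_mult)
  qed
qed

lemma fps_const_X_power_nth: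
  "(fps_const (c::'a::comm_ring_1) * fps_X ^ k) $ m = (if m = k then c else 0)"
  by (simp add: fps_X_power_nth)

lemma binom_poly_nth:
  fixes c1 c2 :: "'a::comm_ring_1"
  shows "((fps_const c1 + fps_const c2 * fps_X) ^ b) $ m = of_nat (b choose m) * c1 ^ (b - m) * c2 ^ m"
proof -
  have "(fps_const c1 + fps_const c2 * fps_X) ^ b =
        (\<Sum>k\<le>b. fps_const (of_nat (b choose k) * c2 ^ k * c1 ^ (b - k)) * fps_X ^ k)"
    unfolding add.commute[of "fps_const c1"] binomial_ring
    by (intro sum.cong refl) (simp add: power_mult_distrib fps_const_power[symmetric] fps_const_mult[symmetric] fps_of_nat[symmetric] mult_ac
            del: fps_const_power fps_const_mult)
  also have "\<dots> $ m = (\<Sum>k\<le>b. if m = k then of_nat (b choose k) * c2 ^ k * c1 ^ (b - k) else 0)"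
    unfolding fps_sum_nth fps_const_X_power_nth ..
  also have "\<dots> = (if m \<in> {..b} then of_nat (b choose m) * c2 ^ m * c1 ^ (b - m) else 0)"
    by (rule sum.delta') simp
  also have "\<dots> = of_nat (b choose m) * c1 ^ (b - m) * c2 ^ m"
    by (auto simp: binomial_eq_0 mult_ac)
  finally show ?thesis .
qed

lemma z_pow_nth:
  fixes c1 c2 :: "'a::comm_ring_1"
  assumes "b \<le> A"
  shows "((fps_const c1 * fps_X + fps_const c2 * fps_X^2) ^ b) $ A =
          of_nat (b choose (A - b)) * c1 ^ (2*b - A) * c2 ^ (A - b)"
proof -
  have "(fps_const c1 * fps_X + fps_const c2 * fps_X^2) ^ b = fps_X ^ b * (fps_const c1 + fps_const c2 * fps_X) ^ b"
    by (simp add: power_mult_distrib[symmetric] algebra_simps power2_eq_square)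
  also have "\<dots> $ A = ((fps_const c1 + fps_const c2 * fps_X) ^ b) $ (A - b)"
    using assms by (simp add: fps_X_power_mult_nth)
  also have "\<dots> = of_nat (b choose (A - b)) * c1 ^ (b - (A - b)) * c2 ^ (A - b)"
    by (rule binom_poly_nth)
  also have "b - (A - b) = 2 * b - A" using assms by arith
  finally show ?thesis .
qed

lemma sv_generic:
  fixes u v :: "complex fps"
  shows "(\<Sum>i\<le>A. fps_const (wc \<theta> i * wc \<theta> (A - i)) * u ^ i * v ^ (A - i)) =
         (\<Sum>b\<le>A. fps_const (wc \<theta> b * of_nat (b choose (A - b))) * (u + v) ^ (2*b - A) * (- (u * v)) ^ (A - b))"
proof -
  define x where "x = fps_const u * (fps_X :: complex fps fps)"
  define y where "y = fps_const v * (fps_X :: complex fps fps)"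
  have x0: "x $ 0 = 0" and y0: "y $ 0 = 0" by (simp_all add: x_def y_def)
  have hm: "(HR \<theta> oo x) * (HR \<theta> oo y) = HR \<theta> oo (x + y - x * y)"
    by (rule H_mult[OF HR_ode _ x0 y0]) (simp add: HR_def)
  have "((HR \<theta> oo x) * (HR \<theta> oo y)) $ A = (\<Sum>i=0..A. u ^ i * fps_const (wc \<theta> i) * (v ^ (A - i) * fps_const (wc \<theta> (A - i))))"
    by (simp add: fps_mult_nth x_def y_def HR_def)
  also have "\<dots> = (\<Sum>i\<le>A. fps_const (wc \<theta> i * wc \<theta> (A - i)) * u ^ i * v ^ (A - i))"
    by (intro sum.cong) (auto simp: atLeast0AtMost)
  finally have L: "((HR \<theta> oo x) * (HR \<theta> oo y)) $ A = (\<Sum>i\<le>A. fps_const (wc \<theta> i * wc \<theta> (A - i)) * u ^ i * v ^ (A - i))" .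
  have nuv: "fps_const (- (u * v)) = - (fps_const u * fps_const v)" by simp
  have z: "x + y - x * y = fps_const (u + v) * fps_X + fps_const (- (u * v)) * fps_X ^ 2"
    unfolding nuv by (simp add: x_def y_def algebra_simps power2_eq_square fps_const_add[symmetric]
        del: fps_const_add fps_const_mult)
  have "(HR \<theta> oo (x + y - x * y)) $ A = (\<Sum>b=0..A. fps_const (wc \<theta> b) * ((fps_const (u + v) * fps_X + fps_const (- (u * v)) * fps_X ^ 2) ^ b) $ A)"
    unfolding z fps_compose_nth by (simp add: HR_def)
  also have "\<dots> = (\<Sum>b\<le>A. fps_const (wc \<theta> b * of_nat (b choose (A - b))) * (u + v) ^ (2*b - A) * (- (u * v)) ^ (A - b))"
    by (intro sum.cong) (auto simp: atLeast0AtMost z_pow_nth fps_of_nat[symmetric])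
  finally show ?thesis using L hm by simp
qed


definition Ii :: "complex \<Rightarrow> complex fps" where "Ii \<tau> = inverse (1 + fps_const \<tau> * fps_X)"
definition Vs :: "complex \<Rightarrow> complex fps" where "Vs \<tau> = - fps_X * Ii \<tau>"
definition Ts :: "complex \<Rightarrow> complex fps" where "Ts \<tau> = fps_X ^ 2 * Ii \<tau>"

lemma Ii_mult: "(1 + fps_const \<tau> * fps_X) * Ii \<tau> = 1"
  unfolding Ii_def by (rule inverse_mult_eq_1') simp

lemma Ii_0[simp]: "Ii \<tau> $ 0 = 1" by (simp add: Ii_def)
lemma Vs_0[simp]: "Vs \<tau> $ 0 = 0" by (simp add: Vs_def fps_mult_nth)
lemma Ts_0[simp]: "Ts \<tau> $ 0 = 0" by (simp add: Ts_def fps_mult_nth)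

lemma XV_sum: "fps_X + Vs \<tau> = fps_const \<tau> * Ts \<tau>"
proof -
  have "fps_X + Vs \<tau> = fps_X * ((1 + fps_const \<tau> * fps_X) * Ii \<tau>) - fps_X * Ii \<tau>"
    by (simp add: Ii_mult Vs_def)
  also have "\<dots> = fps_const \<tau> * Ts \<tau>" by (simp add: Ts_def algebra_simps power2_eq_square)
  finally show ?thesis .
qed

lemma XV_prod: "fps_X * Vs \<tau> = - Ts \<tau>"
  by (simp add: Vs_def Ts_def power2_eq_square)

lemma sv_special:
  "(\<Sum>i\<le>A. fps_const (wc \<theta> i * wc \<theta> (A - i)) * fps_X ^ i * Vs \<tau> ^ (A - i)) =
   (\<Sum>b\<le>A. fps_const (wc \<theta> b * of_nat (b choose (A - b)) * \<tau> ^ (2*b - A)) * Ts \<tau> ^ b)"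
proof -
  have "(\<Sum>i\<le>A. fps_const (wc \<theta> i * wc \<theta> (A - i)) * fps_X ^ i * Vs \<tau> ^ (A - i)) =
        (\<Sum>b\<le>A. fps_const (wc \<theta> b * of_nat (b choose (A - b))) * (fps_const \<tau> * Ts \<tau>) ^ (2*b - A) * (Ts \<tau>) ^ (A - b))"
    using sv_generic[of \<theta> A fps_X "Vs \<tau>"] by (simp add: XV_sum XV_prod)
  also have "\<dots> = (\<Sum>b\<le>A. fps_const (wc \<theta> b * of_nat (b choose (A - b)) * \<tau> ^ (2*b - A)) * Ts \<tau> ^ b)"
  proof (intro sum.cong refl)
    fix b assume "b \<in> {..A}"
    show "fps_const (wc \<theta> b * of_nat (b choose (A - b))) * (fps_const \<tau> * Ts \<tau>) ^ (2*b - A) * (Ts \<tau>) ^ (A - b) =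
          fps_const (wc \<theta> b * of_nat (b choose (A - b)) * \<tau> ^ (2*b - A)) * Ts \<tau> ^ b"
    proof (cases "A \<le> 2 * b")
      case True
      then have "2*b - A + (A - b) = b" using \<open>b \<in> {..A}\<close> by auto
      then have "(Ts \<tau>) ^ (2*b - A) * (Ts \<tau>) ^ (A - b) = Ts \<tau> ^ b" by (metis power_add)
      then show ?thesis
        by (simp add: power_mult_distrib fps_const_power[symmetric] fps_const_mult[symmetric] mult_ac
            del: fps_const_power fps_const_mult)
    next
      case False
      then have "b choose (A - b) = 0" by (intro binomial_eq_0) arith
      then show ?thesis by simp
    qed
  qed
  finally show ?thesis .
qed

fun Lser :: "complex \<Rightarrow> nat \<Rightarrow> complex fps" where
  "Lser \<tau> 0 = 2"
| "Lser \<tau> (Suc 0) = fps_const \<tau> * fps_X"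
| "Lser \<tau> (Suc (Suc d)) = fps_const \<tau> * fps_X * Lser \<tau> (Suc d) + fps_X * Lser \<tau> d"

definition Kser :: "complex \<Rightarrow> nat \<Rightarrow> nat \<Rightarrow> complex fps" where
  "Kser \<tau> m n = fps_const (1/2) * (- fps_X) ^ (min m n) * Lser \<tau> (max m n - min m n)"

definition Psi :: "complex \<Rightarrow> complex fps \<Rightarrow> complex fps" where
  "Psi \<tau> A = Abs_fps (\<lambda>k. \<Sum>m\<le>2*k. \<Sum>n\<le>2*k. Kser \<tau> m n $ k * A $ m * A $ n)"

lemma L_comp: "Lser \<tau> d oo Ts \<tau> = fps_X ^ d + Vs \<tau> ^ d"
proof (induction \<tau> d rule: Lser.induct)
  case (1 \<tau>) then show ?case by simp
next
  case (2 \<tau>) then show ?case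
    by (simp add: fps_compose_mult_distrib XV_sum)
next
  case (3 \<tau> d)
  have "Lser \<tau> (Suc (Suc d)) oo Ts \<tau> = fps_const \<tau> * Ts \<tau> * (Lser \<tau> (Suc d) oo Ts \<tau>) + Ts \<tau> * (Lser \<tau> d oo Ts \<tau>)"
    by (simp add: fps_compose_mult_distrib fps_compose_add_distrib)
  also have "\<dots> = (fps_X + Vs \<tau>) * (fps_X ^ Suc d + Vs \<tau> ^ Suc d) - (fps_X * Vs \<tau>) * (fps_X ^ d + Vs \<tau> ^ d)"
    using 3 by (simp only: XV_sum XV_prod) simp
  also have "\<dots> = fps_X ^ Suc (Suc d) + Vs \<tau> ^ Suc (Suc d)" by (simp add: distrib_left distrib_right mult_ac)
  finally show ?case .
qed

lemma K_comp: "Kser \<tau> m n oo Ts \<tau> = fps_const (1/2) * (fps_X ^ m * Vs \<tau> ^ n + fps_X ^ n * Vs \<tau> ^ m)"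
proof -
  have "Kser \<tau> m n oo Ts \<tau> = fps_const (1/2) * (fps_X * Vs \<tau>) ^ (min m n) * (fps_X ^ (max m n - min m n) + Vs \<tau> ^ (max m n - min m n))"
    unfolding Kser_def
    by (simp add: fps_compose_mult_distrib fps_compose_power[symmetric] fps_compose_uminus L_comp XV_prod)
  also have "\<dots> = fps_const (1/2) * (fps_X ^ m * Vs \<tau> ^ n + fps_X ^ n * Vs \<tau> ^ m)"
  proof (cases "m \<le> n")
    case True
    then obtain d where d: "n = m + d" using le_Suc_ex by blast
    have "fps_X ^ m * Vs \<tau> ^ (m + d) + fps_X ^ (m + d) * Vs \<tau> ^ m = (fps_X * Vs \<tau>) ^ m * (fps_X ^ d + Vs \<tau> ^ d)"
      by (simp add: power_add power_mult_distrib distrib_left mult_ac)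
    then show ?thesis using d by (simp add: max_def min_def)
  next
    case False
    then obtain d where d: "m = n + d" using le_Suc_ex[of n m] by auto
    have "fps_X ^ (n + d) * Vs \<tau> ^ n + fps_X ^ n * Vs \<tau> ^ (n + d) = (fps_X * Vs \<tau>) ^ n * (fps_X ^ d + Vs \<tau> ^ d)"
      by (simp add: power_add power_mult_distrib distrib_left mult_ac)
    then show ?thesis using d by (simp add: max_def min_def)
  qed
  finally show ?thesis .
qed

lemma L_nth_zero: "2 * k < d \<Longrightarrow> Lser \<tau> d $ k = 0"
proof (induction \<tau> d arbitrary: k rule: Lser.induct)
  case (1 \<tau>) then show ?case by simp
next
  case (2 \<tau>) then show ?case by simp
next
  case (3 \<tau> d)
  show ?case
  proof (cases k)
    case 0 then show ?thesis by (simp add: fps_mult_nth)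
  next
    case (Suc j)
    have a: "Lser \<tau> (Suc d) $ j = 0" using 3 Suc by simp
    have b: "Lser \<tau> d $ j = 0" using 3 Suc by simp
    have "(fps_const \<tau> * fps_X * Lser \<tau> (Suc d)) $ k = \<tau> * Lser \<tau> (Suc d) $ j"
      using Suc by (simp add: mult.assoc fps_X_mult_nth)
    moreover have "(fps_X * Lser \<tau> d) $ k = Lser \<tau> d $ j" using Suc by (simp add: fps_X_mult_nth)
    ultimately show ?thesis using a b by simp
  qed
qed

lemma negX_pow: "(- fps_X :: complex fps) ^ j = fps_const ((-1) ^ j) * fps_X ^ j"
  by (induction j) (simp_all add: fps_const_neg[symmetric] fps_const_mult[symmetric] del: fps_const_neg fps_const_mult)

lemma K_nth_zero: "2 * k < m + n \<Longrightarrow> Kser \<tau> m n $ k = 0"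
proof -
  assume h: "2 * k < m + n"
  have "Kser \<tau> m n = fps_const ((1/2) * (-1) ^ min m n) * (fps_X ^ min m n * Lser \<tau> (max m n - min m n))"
    by (simp add: Kser_def negX_pow mult_ac)
  moreover have "(fps_X ^ min m n * Lser \<tau> (max m n - min m n)) $ k = 0"
  proof (cases "min m n \<le> k")
    case True
    have "2 * (k - min m n) < max m n - min m n" using h True by (simp add: max_def min_def) arith
    then show ?thesis using True by (simp add: fps_X_power_mult_nth L_nth_zero)
  next
    case False then show ?thesis by (auto simp: fps_X_power_mult_nth)
  qed
  ultimately show ?thesis by simp
qed


lemma comp_T_inj: assumes "R oo Ts \<tau> = 0" shows "R = 0"
proof (rule ccontr)
  assume R: "R \<noteq> 0"
  define k where "k = subdegree R"
  define S where "S = fps_shift k R"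
  have RS: "R = S * fps_X ^ k" unfolding S_def k_def by (rule subdegree_decompose)
  have S0: "(S oo Ts \<tau>) $ 0 \<noteq> 0" using R by (simp add: S_def k_def)
  have "S oo Ts \<tau> \<noteq> 0"
  proof
    assume "S oo Ts \<tau> = 0"
    then have "(S oo Ts \<tau>) $ 0 = 0" by simp
    with S0 show False by blast
  qed
  moreover have "Ts \<tau> ^ k \<noteq> 0"
  proof -
    have "Ii \<tau> \<noteq> 0"
    proof
      assume "Ii \<tau> = 0" then have "Ii \<tau> $ 0 = 0" by simp
      then show False by simp
    qed
    then have "Ts \<tau> \<noteq> 0" by (simp add: Ts_def)
    then show ?thesis by simp
  qed
  moreover have "R oo Ts \<tau> = (S oo Ts \<tau>) * Ts \<tau> ^ k"
    unfolding RS by (simp add: fps_compose_mult_distrib fps_compose_power[symmetric])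
  ultimately have "R oo Ts \<tau> \<noteq> 0" by simp
  with assms show False by simp
qed

lemma comp_T_inj': assumes "R oo Ts \<tau> = Q oo Ts \<tau>" shows "R = Q"
  using comp_T_inj[of "R - Q" \<tau>] assms by (simp add: fps_compose_sub_distrib)

lemma double_sum_extend:
  fixes g :: "nat \<Rightarrow> nat \<Rightarrow> 'b::comm_monoid_add"
  assumes "a \<le> N" and "\<And>m n. m \<le> N \<Longrightarrow> n \<le> N \<Longrightarrow> (a < m \<or> a < n) \<Longrightarrow> g m n = 0"
  shows "(\<Sum>m\<le>a. \<Sum>n\<le>a. g m n) = (\<Sum>m\<le>N. \<Sum>n\<le>N. g m n)"
proof -
  have "(\<Sum>m\<le>a. \<Sum>n\<le>a. g m n) = (\<Sum>m\<le>a. \<Sum>n\<le>N. g m n)"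
    using assms by (intro sum.cong refl sum.mono_neutral_left) auto
  also have "\<dots> = (\<Sum>m\<le>N. \<Sum>n\<le>N. g m n)"
    using assms by (intro sum.mono_neutral_left) (auto intro!: sum.neutral)
  finally show ?thesis .
qed

lemma Psi_nth: "Psi \<tau> A $ k = (\<Sum>m\<le>2*k. \<Sum>n\<le>2*k. Kser \<tau> m n $ k * A $ m * A $ n)"
  by (simp add: Psi_def)

lemma Psi_poly:
  assumes "\<And>m. M < m \<Longrightarrow> A $ m = 0"
  shows "Psi \<tau> A = (\<Sum>m\<le>M. \<Sum>n\<le>M. fps_const (A $ m * A $ n) * Kser \<tau> m n)"
proof (rule fps_ext)
  fix k
  define N where "N = max (2*k) M"
  have "Psi \<tau> A $ k = (\<Sum>m\<le>N. \<Sum>n\<le>N. Kser \<tau> m n $ k * A $ m * A $ n)"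
    unfolding Psi_nth N_def by (rule double_sum_extend) (auto simp: K_nth_zero)
  also have "\<dots> = (\<Sum>m\<le>M. \<Sum>n\<le>M. Kser \<tau> m n $ k * A $ m * A $ n)"
    unfolding N_def by (rule double_sum_extend[symmetric]) (auto simp: assms)
  also have "\<dots> = (\<Sum>m\<le>M. \<Sum>n\<le>M. fps_const (A $ m * A $ n) * Kser \<tau> m n) $ k"
    by (simp add: fps_sum_nth mult_ac)
  finally show "Psi \<tau> A $ k = (\<Sum>m\<le>M. \<Sum>n\<le>M. fps_const (A $ m * A $ n) * Kser \<tau> m n) $ k" .
qed

lemma sym_double_sum:
  fixes c :: "nat \<Rightarrow> nat \<Rightarrow> complex" and x :: "nat \<Rightarrow> nat \<Rightarrow> complex fps"
  assumes "\<And>m n. c m n = c n m"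
  shows "(\<Sum>m\<le>M. \<Sum>n\<le>M. fps_const (c m n) * (fps_const (1/2) * (x m n + x n m))) =
         (\<Sum>m\<le>M. \<Sum>n\<le>M. fps_const (c m n) * x m n)"
proof -
  have sw: "(\<Sum>m\<le>M. \<Sum>n\<le>M. fps_const (c m n) * x n m) = (\<Sum>m\<le>M. \<Sum>n\<le>M. fps_const (c m n) * x m n)"
    by (subst sum.swap) (simp add: assms)
  have "(\<Sum>m\<le>M. \<Sum>n\<le>M. fps_const (c m n) * (fps_const (1/2) * (x m n + x n m))) =
        fps_const (1/2) * ((\<Sum>m\<le>M. \<Sum>n\<le>M. fps_const (c m n) * x m n) + (\<Sum>m\<le>M. \<Sum>n\<le>M. fps_const (c m n) * x n m))"
    by (simp add: sum_distrib_left sum.distrib algebra_simps)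
  also have "\<dots> = fps_const (1/2) * (2 * (\<Sum>m\<le>M. \<Sum>n\<le>M. fps_const (c m n) * x m n))"
    unfolding sw by simp
  also have "\<dots> = (\<Sum>m\<le>M. \<Sum>n\<le>M. fps_const (c m n) * x m n)"
  proof -
    have two: "(2::complex fps) = fps_const 2" by (simp add: numeral_fps_const)
    have "fps_const (1/2) * (2::complex fps) = 1" unfolding two by simp
    then show ?thesis by (simp add: mult.assoc[symmetric])
  qed
  finally show ?thesis .
qed

lemma Psi_comp: "Psi \<tau> A oo Ts \<tau> = A * (A oo Vs \<tau>)"
proof (rule fps_ext)
  fix N :: nat
  define M where "M = 2 * N"
  define P where "P = Abs_fps (\<lambda>m. if m \<le> M then A $ m else 0)"
  have PA: "P $ m = A $ m" if "m \<le> M" for m using that by (simp add: P_def)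
  have Pz: "P $ m = 0" if "M < m" for m using that by (simp add: P_def)
  have e1: "(Psi \<tau> A oo Ts \<tau>) $ N = (Psi \<tau> P oo Ts \<tau>) $ N"
    unfolding fps_compose_nth
  proof (intro sum.cong refl)
    fix k assume "k \<in> {0..N}"
    then have "Psi \<tau> A $ k = Psi \<tau> P $ k" unfolding Psi_nth
      by (intro sum.cong refl) (auto simp: PA M_def)
    then show "Psi \<tau> A $ k * Ts \<tau> ^ k $ N = Psi \<tau> P $ k * Ts \<tau> ^ k $ N" by simp
  qed
  have e2: "(A * (A oo Vs \<tau>)) $ N = (P * (P oo Vs \<tau>)) $ N"
    unfolding fps_mult_nth fps_compose_nth
    by (intro sum.cong refl) (auto simp: PA M_def)
  have Pexp: "P = (\<Sum>m\<le>M. fps_const (A $ m) * fps_X ^ m)"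
  proof (rule fps_ext)
    fix k show "P $ k = (\<Sum>m\<le>M. fps_const (A $ m) * fps_X ^ m) $ k"
      unfolding fps_sum_nth fps_const_X_power_nth sum.delta'[OF finite_atMost] by (simp add: P_def)
  qed
  have "Psi \<tau> P oo Ts \<tau> = (\<Sum>m\<le>M. \<Sum>n\<le>M. fps_const (A $ m * A $ n) * (Kser \<tau> m n oo Ts \<tau>))"
    using Psi_poly[of M P \<tau>, OF Pz]
    by (simp add: fps_compose_sum_distrib fps_compose_mult_distrib PA)
  also have "\<dots> = (\<Sum>m\<le>M. \<Sum>n\<le>M. fps_const (A $ m * A $ n) * (fps_X ^ m * Vs \<tau> ^ n))"
    unfolding K_comp by (rule sym_double_sum) simp
  also have "\<dots> = P * (P oo Vs \<tau>)"
  proof -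
    have PV: "P oo Vs \<tau> = (\<Sum>n\<le>M. fps_const (A $ n) * Vs \<tau> ^ n)"
      unfolding Pexp by (simp add: fps_compose_sum_distrib fps_compose_mult_distrib fps_compose_power[symmetric])
    have "P * (P oo Vs \<tau>) = (\<Sum>m\<le>M. \<Sum>n\<le>M. fps_const (A $ m) * fps_X ^ m * (fps_const (A $ n) * Vs \<tau> ^ n))"
      unfolding PV by (subst (1) Pexp) (rule sum_product)
    also have "\<dots> = (\<Sum>m\<le>M. \<Sum>n\<le>M. fps_const (A $ m * A $ n) * (fps_X ^ m * Vs \<tau> ^ n))"
      by (intro sum.cong refl) (simp add: mult_ac)
    finally show ?thesis by simp
  qed
  finally show "(Psi \<tau> A oo Ts \<tau>) $ N = (A * (A oo Vs \<tau>)) $ N" using e1 e2 by simp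
qed

lemma Psi_mult: "Psi \<tau> (A * B) = Psi \<tau> A * Psi \<tau> B"
proof (rule comp_T_inj')
  show "Psi \<tau> (A * B) oo Ts \<tau> = Psi \<tau> A * Psi \<tau> B oo Ts \<tau>"
    by (simp add: fps_compose_mult_distrib Psi_comp mult_ac)
qed

lemma Psi_one: "Psi \<tau> 1 = 1"
  by (rule comp_T_inj'[where \<tau>=\<tau>]) (simp add: Psi_comp)

lemma Psi_prod: "Psi \<tau> (\<Prod>i<(N::nat). f i) = (\<Prod>i<N. Psi \<tau> (f i))"
  by (induction N) (simp_all add: Psi_one Psi_mult)

lemma Psi_exp: "Psi \<tau> (fps_exp c) = fps_exp (\<tau> * c)"
proof (rule comp_T_inj')
  have "Psi \<tau> (fps_exp c) oo Ts \<tau> = (fps_exp c oo fps_X) * (fps_exp c oo Vs \<tau>)"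
    by (simp add: Psi_comp)
  also have "\<dots> = fps_exp c oo (fps_X + Vs \<tau>)" by (rule E_mult) simp_all
  also have "\<dots> = fps_exp c oo ((fps_const \<tau> * fps_X) oo Ts \<tau>)"
    by (simp add: XV_sum fps_compose_mult_distrib)
  also have "\<dots> = fps_exp (\<tau> * c) oo Ts \<tau>"
    by (subst fps_compose_assoc) simp_all
  finally show "Psi \<tau> (fps_exp c) oo Ts \<tau> = fps_exp (\<tau> * c) oo Ts \<tau>" .
qed

lemma Psi_f:
  "Psi \<tau> ((1 + fps_const b * fps_X) * (Hw \<theta> oo (fps_const a * fps_X))) =
   (1 + fps_const (b * \<tau> - b^2) * fps_X) * (Hw \<theta> oo (fps_const (a * (\<tau> + a)) * fps_X))"
proof (rule comp_T_inj')
  let ?H = "Hw \<theta>"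
  have c1: "(?H oo (fps_const a * fps_X)) oo Vs \<tau> = ?H oo (fps_const a * Vs \<tau>)"
    by (subst fps_compose_assoc[symmetric]) (simp_all add: fps_compose_mult_distrib)
  have c2: "(?H oo (fps_const (a * (\<tau> + a)) * fps_X)) oo Ts \<tau> = ?H oo (fps_const (a * (\<tau> + a)) * Ts \<tau>)"
    by (subst fps_compose_assoc[symmetric]) (simp_all add: fps_compose_mult_distrib)
  have hm: "(?H oo (fps_const a * fps_X)) * (?H oo (fps_const a * Vs \<tau>)) =
            ?H oo (fps_const a * fps_X + fps_const a * Vs \<tau> - fps_const a * fps_X * (fps_const a * Vs \<tau>))"
    by (rule H_mult[OF Hw_ode]) (simp_all add: Hw_def fps_mult_nth)
  have z: "fps_const a * fps_X + fps_const a * Vs \<tau> - fps_const a * fps_X * (fps_const a * Vs \<tau>) =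
           fps_const (a * (\<tau> + a)) * Ts \<tau>"
  proof -
    have "fps_const a * fps_X + fps_const a * Vs \<tau> - fps_const a * fps_X * (fps_const a * Vs \<tau>) =
          fps_const a * (fps_X + Vs \<tau>) - fps_const a * fps_const a * (fps_X * Vs \<tau>)"
      by (simp add: algebra_simps)
    also have "\<dots> = fps_const (a * (\<tau> + a)) * Ts \<tau>"
    proof -
      have cst: "fps_const (a * (\<tau> + a)) = fps_const a * fps_const \<tau> + fps_const a * fps_const a"
        by (simp add: algebra_simps)
      show ?thesis unfolding XV_sum XV_prod cst by (simp add: algebra_simps del: fps_const_mult fps_const_add)
    qed
    finally show ?thesis .
  qed
  have lin: "(1 + fps_const b * fps_X) * (1 + fps_const b * Vs \<tau>) = 1 + fps_const (b * \<tau> - b^2) * Ts \<tau>"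
  proof -
    have "(1 + fps_const b * fps_X) * (1 + fps_const b * Vs \<tau>) =
          1 + fps_const b * (fps_X + Vs \<tau>) + fps_const b * fps_const b * (fps_X * Vs \<tau>)"
      by (simp add: algebra_simps)
    also have "\<dots> = 1 + fps_const (b * \<tau> - b^2) * Ts \<tau>"
    proof -
      have cst: "fps_const (b * \<tau> - b^2) = fps_const b * fps_const \<tau> - fps_const b * fps_const b"
        by (simp add: power2_eq_square)
      show ?thesis unfolding XV_sum XV_prod cst by (simp add: algebra_simps del: fps_const_mult fps_const_add fps_const_sub)
    qed
    finally show ?thesis .
  qed
  have "Psi \<tau> ((1 + fps_const b * fps_X) * (?H oo (fps_const a * fps_X))) oo Ts \<tau> =
        ((1 + fps_const b * fps_X) * (1 + fps_const b * Vs \<tau>)) *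
        ((?H oo (fps_const a * fps_X)) * (?H oo (fps_const a * Vs \<tau>)))"
  proof -
    have fV: "((1 + fps_const b * fps_X) * (?H oo (fps_const a * fps_X))) oo Vs \<tau> =
              (1 + fps_const b * Vs \<tau>) * (?H oo (fps_const a * Vs \<tau>))"
      by (simp add: fps_compose_mult_distrib fps_compose_add_distrib c1)
    show ?thesis unfolding Psi_comp fV by (simp add: mult_ac)
  qed
  also have "\<dots> = (1 + fps_const (b * \<tau> - b^2) * Ts \<tau>) * (?H oo (fps_const (a * (\<tau> + a)) * Ts \<tau>))"
    unfolding lin hm z ..
  also have "\<dots> = (1 + fps_const (b * \<tau> - b^2) * fps_X) * (?H oo (fps_const (a * (\<tau> + a)) * fps_X)) oo Ts \<tau>"
    by (simp add: fps_compose_mult_distrib fps_compose_add_distrib c2)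
  finally show "Psi \<tau> ((1 + fps_const b * fps_X) * (?H oo (fps_const a * fps_X))) oo Ts \<tau> =
        (1 + fps_const (b * \<tau> - b^2) * fps_X) * (?H oo (fps_const (a * (\<tau> + a)) * fps_X)) oo Ts \<tau>" .
qed


definition ofr :: "real fps \<Rightarrow> complex fps" where "ofr F = Abs_fps (\<lambda>n. of_real (F $ n))"

lemma ofr_nth[simp]: "ofr F $ n = of_real (F $ n)" by (simp add: ofr_def)
lemma ofr_one: "ofr 1 = 1" by (rule fps_ext) simp
lemma ofr_mult: "ofr (F * G) = ofr F * ofr G" by (rule fps_ext) (simp add: fps_mult_nth)
lemma ofr_prod: "ofr (\<Prod>i<(N::nat). g i) = (\<Prod>i<N. ofr (g i))"
  by (induction N) (simp_all add: ofr_one ofr_mult)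

lemma prod_conv_real:
  fixes g :: "nat \<Rightarrow> real fps"
  assumes nn: "\<And>i j. g i $ j \<ge> 0" and one: "\<And>i. g i $ 0 = 1"
    and bd: "\<And>N. (\<Prod>i<N. (\<Sum>j\<le>n. g i $ j)) \<le> B"
  shows "convergent (\<lambda>N. (\<Prod>i<N. g i) $ n)"
proof -
  define P where "P N = (\<Prod>i<N. g i)" for N
  have PS: "P (Suc N) = P N * g N" for N by (simp add: P_def)
  have Pnn: "P N $ j \<ge> 0" for N j
  proof (induction N arbitrary: j)
    case 0 then show ?case by (simp add: P_def)
  next
    case (Suc N) then show ?case unfolding PS fps_mult_nth by (intro sum_nonneg mult_nonneg_nonneg nn) auto
  qed
  have mono: "P N $ n \<le> P (Suc N) $ n" for N
  proof -
    have "P N $ n = P N $ n * g N $ (n - n)" by (simp add: one)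
    also have "\<dots> \<le> (\<Sum>i=0..n. P N $ i * g N $ (n - i))"
      by (rule member_le_sum[where f = "\<lambda>i. P N $ i * g N $ (n - i)"]) (auto intro: mult_nonneg_nonneg Pnn nn)
    finally show ?thesis unfolding PS fps_mult_nth .
  qed
  have bnd: "\<forall>j\<le>n. P N $ j \<le> (\<Prod>i<N. (\<Sum>j\<le>n. g i $ j))" for N
  proof (induction N)
    case 0 then show ?case by (simp add: P_def)
  next
    case (Suc N)
    define BN where "BN = (\<Prod>i<N. (\<Sum>j\<le>n. g i $ j))"
    show ?case
    proof (intro allI impI)
      fix j assume jn: "j \<le> n"
      have "P (Suc N) $ j = (\<Sum>l=0..j. P N $ l * g N $ (j - l))" unfolding PS fps_mult_nth ..
      also have "\<dots> \<le> (\<Sum>l=0..j. BN * g N $ (j - l))"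
        using Suc jn by (intro sum_mono mult_right_mono) (auto simp: BN_def nn)
      also have "\<dots> = BN * (\<Sum>l=0..j. g N $ (j - l))" by (simp add: sum_distrib_left)
      also have "\<dots> \<le> BN * (\<Sum>l\<le>n. g N $ l)"
      proof (rule mult_left_mono)
        have "(\<Sum>l=0..j. g N $ (j - l)) = (\<Sum>l=0..j. g N $ l)"
          by (rule sum.reindex_bij_witness[of _ "\<lambda>l. j - l" "\<lambda>l. j - l"]) auto
        also have "\<dots> \<le> (\<Sum>l\<le>n. g N $ l)"
          using jn by (intro sum_mono2) (auto simp: nn)
        finally show "(\<Sum>l=0..j. g N $ (j - l)) \<le> (\<Sum>l\<le>n. g N $ l)" .
        show "0 \<le> BN" unfolding BN_def by (intro prod_nonneg sum_nonneg nn)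
      qed
      finally have "P (Suc N) $ j \<le> BN * (\<Sum>l\<le>n. g N $ l)" .
      then show "P (Suc N) $ j \<le> (\<Prod>i<Suc N. (\<Sum>j\<le>n. g i $ j))"
        by (simp add: BN_def mult.commute)
    qed
  qed
  have "Bseq (\<lambda>N. P N $ n)"
  proof (rule BseqI'[where K = B])
    fix N show "norm (P N $ n) \<le> B" using bnd[of N] bd[of N] Pnn[of N n] by auto
  qed
  moreover have "monoseq (\<lambda>N. P N $ n)"
    by (rule mono_SucI1) (use mono in auto)
  ultimately show ?thesis unfolding P_def by (rule Bseq_monoseq_convergent)
qed


definition wr :: "real \<Rightarrow> nat \<Rightarrow> real" where "wr \<theta> j = pochhammer \<theta> j / fact j"

definition Gr :: "real \<Rightarrow> real \<Rightarrow> real fps" where "Gr \<theta> a = Abs_fps (\<lambda>j. wr \<theta> j * a ^ j)"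

definition gr :: "real \<Rightarrow> real \<Rightarrow> real \<Rightarrow> real fps" where
  "gr \<theta> a b = (1 + fps_const b * fps_X) * Gr \<theta> a"

lemma omp_Hw: "fps_one_minus_pow a (- of_real \<theta>) = Hw \<theta> oo (fps_const a * fps_X)"
proof (rule fps_ext)
  fix j
  have "fps_one_minus_pow a (- of_real \<theta>) $ j = (- a) ^ j * (- of_real \<theta> gchoose j)"
  proof -
    have "- fps_const a * fps_X = fps_const (-a) * fps_X" by simp
    then show ?thesis unfolding fps_one_minus_pow_def by (simp only: fps_nth_compose_linear fps_binomial_nth)
  qed
  also have "\<dots> = ((-1) ^ j * (-1) ^ j) * a ^ j * (pochhammer (of_real \<theta>) j / fact j)"
    by (simp add: gbinomial_pochhammer power_minus[of a] mult_ac)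
  also have "\<dots> = a ^ j * wc \<theta> j"
    by (simp add: wc_def power_mult_distrib[symmetric])
  finally show "fps_one_minus_pow a (- of_real \<theta>) $ j = (Hw \<theta> oo (fps_const a * fps_X)) $ j"
    by (simp add: Hw_def)
qed

lemma ofr_Gr: "ofr (Gr \<theta> a) = Hw \<theta> oo (fps_const (of_real a) * fps_X)"
  by (rule fps_ext) (simp add: Gr_def Hw_def wc_def wr_def pochhammer_of_real)

lemma ofr_lin: "ofr (1 + fps_const b * fps_X) = 1 + fps_const (of_real b) * fps_X"
  by (rule fps_ext) (simp add: mult.commute[of "fps_const b" fps_X] mult.commute[of "fps_const (of_real b)" fps_X] fps_X_mult_nth)

lemma f_eq:
  "(1 + fps_const (complex_of_real b) * fps_X) * fps_one_minus_pow (complex_of_real a) (- complex_of_real \<theta>)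
   = ofr (gr \<theta> a b)"
  by (simp add: gr_def ofr_mult ofr_lin ofr_Gr omp_Hw)

lemma wr_nonneg: "\<theta> > 0 \<Longrightarrow> wr \<theta> j \<ge> 0"
  by (simp add: wr_def pochhammer_nonneg)

lemma Gr_nonneg: "\<theta> > 0 \<Longrightarrow> a \<ge> 0 \<Longrightarrow> Gr \<theta> a $ j \<ge> 0"
  by (simp add: Gr_def wr_nonneg)

lemma gr_nth: "gr \<theta> a b $ j = Gr \<theta> a $ j + b * (if j = 0 then 0 else Gr \<theta> a $ (j - 1))"
  by (simp add: gr_def algebra_simps fps_X_mult_nth mult.assoc)

lemma gr_nonneg: "\<theta> > 0 \<Longrightarrow> a \<ge> 0 \<Longrightarrow> b \<ge> 0 \<Longrightarrow> gr \<theta> a b $ j \<ge> 0"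
  by (simp add: gr_nth Gr_nonneg)

lemma gr_0: "gr \<theta> a b $ 0 = 1"
  by (simp add: gr_nth Gr_def wr_def)

lemma SG_bound:
  assumes th: "\<theta> > 0" and a: "0 \<le> a" "a \<le> A"
  shows "(\<Sum>j\<le>n. Gr \<theta> a $ j) \<le> 1 + a * (\<Sum>j\<le>n. wr \<theta> j * (A + 1) ^ j)"
proof -
  have pw: "a ^ j \<le> (if j = 0 then 1 else 0) + a * (A + 1) ^ j" for j
  proof (cases j)
    case 0 then show ?thesis using a by simp
  next
    case (Suc k)
    have "a ^ k \<le> (A + 1) ^ k" using a by (intro power_mono) auto
    also have "\<dots> \<le> (A + 1) ^ Suc k" using a by (intro power_increasing) auto
    finally have "a * a ^ k \<le> a * (A + 1) ^ Suc k" using a by (intro mult_left_mono) auto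
    then show ?thesis using Suc by simp
  qed
  have pw2: "Gr \<theta> a $ j \<le> (if j = 0 then wr \<theta> j else 0) + a * (wr \<theta> j * (A + 1) ^ j)" for j
  proof -
    have "Gr \<theta> a $ j = wr \<theta> j * a ^ j" by (simp add: Gr_def)
    also have "\<dots> \<le> wr \<theta> j * ((if j = 0 then 1 else 0) + a * (A + 1) ^ j)"
      using pw wr_nonneg[OF th] by (intro mult_left_mono) auto
    also have "\<dots> = (if j = 0 then wr \<theta> j else 0) + a * (wr \<theta> j * (A + 1) ^ j)"
      by (simp add: algebra_simps)
    finally show ?thesis .
  qed
  have "(\<Sum>j\<le>n. Gr \<theta> a $ j) \<le> (\<Sum>j\<le>n. (if j = 0 then wr \<theta> j else 0) + a * (wr \<theta> j * (A + 1) ^ j))"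
    by (intro sum_mono pw2)
  also have "\<dots> = (\<Sum>j\<le>n. (if j = 0 then wr \<theta> j else 0)) + a * (\<Sum>j\<le>n. wr \<theta> j * (A + 1) ^ j)"
    by (simp only: sum.distrib sum_distrib_left)
  also have "(\<Sum>j\<le>n. (if j = 0 then wr \<theta> j else 0)) = 1"
    by (subst sum.delta) (simp_all add: wr_def)
  finally show ?thesis .
qed

lemma Sg_bound:
  assumes th: "\<theta> > 0" and a: "0 \<le> a" "a \<le> A" and b: "0 \<le> b"
  shows "(\<Sum>j\<le>n. gr \<theta> a b $ j) \<le> exp (b + a * (\<Sum>j\<le>n. wr \<theta> j * (A + 1) ^ j))"
proof -
  define C where "C = (\<Sum>j\<le>n. wr \<theta> j * (A + 1) ^ j)"
  define SG where "SG = (\<Sum>j\<le>n. Gr \<theta> a $ j)"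
  have SGb: "SG \<le> 1 + a * C" unfolding SG_def C_def by (rule SG_bound[OF th a])
  have C0: "0 \<le> C" unfolding C_def using a by (intro sum_nonneg mult_nonneg_nonneg wr_nonneg th) auto
  have SGnn: "0 \<le> SG" unfolding SG_def by (intro sum_nonneg Gr_nonneg th a)
  have shift: "(\<Sum>j\<le>n. (if j = 0 then 0 else Gr \<theta> a $ (j - 1))) \<le> SG"
  proof (cases n)
    case 0 then show ?thesis using SGnn by simp
  next
    case (Suc m)
    have "(\<Sum>j\<le>n. (if j = 0 then 0 else Gr \<theta> a $ (j - 1))) = (\<Sum>j\<le>m. Gr \<theta> a $ j)"
      unfolding Suc sum.atMost_Suc_shift by simp
    also have "\<dots> \<le> SG" unfolding SG_def Suc
      by (intro sum_mono2) (auto intro: Gr_nonneg th a)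
    finally show ?thesis .
  qed
  have "(\<Sum>j\<le>n. gr \<theta> a b $ j) = SG + b * (\<Sum>j\<le>n. (if j = 0 then 0 else Gr \<theta> a $ (j - 1)))"
    unfolding gr_nth SG_def by (simp add: sum.distrib sum_distrib_left)
  also have "\<dots> \<le> SG + b * SG" using shift b by (intro add_left_mono mult_left_mono) auto
  also have "\<dots> = (1 + b) * SG" by (simp add: algebra_simps)
  also have "\<dots> \<le> (1 + b) * (1 + a * C)" using SGb b by (intro mult_left_mono) auto
  also have "\<dots> \<le> exp b * exp (a * C)"
    using b a C0 by (intro mult_mono) (auto simp: add_nonneg_nonneg)
  also have "\<dots> = exp (b + a * C)" by (simp add: exp_add)
  finally show ?thesis unfolding C_def .
qed

lemma conv_gr:
  assumes th: "\<theta> > 0" and vk: "VK_params \<alpha> \<beta> \<gamma>"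
  shows "convergent (\<lambda>N. (\<Prod>i<N. gr \<theta> (\<alpha> i) (\<beta> i * \<theta>)) $ n)"
proof -
  from vk have am: "antimono \<alpha>" and nn: "\<And>i. \<alpha> i \<ge> 0 \<and> \<beta> i \<ge> 0" and sm: "summable (\<lambda>i. \<alpha> i + \<beta> i)"
    by (auto simp: VK_params_def)
  have aA: "\<alpha> i \<le> \<alpha> 0" for i using am by (auto simp: antimono_def)
  define C where "C = (\<Sum>j\<le>n. wr \<theta> j * (\<alpha> 0 + 1) ^ j)"
  have C0: "C \<ge> 0" unfolding C_def using nn[of 0] by (intro sum_nonneg mult_nonneg_nonneg wr_nonneg th) auto
  define B where "B = exp ((\<theta> + C) * suminf (\<lambda>i. \<alpha> i + \<beta> i))"
  show ?thesis
  proof (rule prod_conv_real[where B = B])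
    fix i j show "gr \<theta> (\<alpha> i) (\<beta> i * \<theta>) $ j \<ge> 0" using nn[of i] th by (intro gr_nonneg) auto
  next
    fix i show "gr \<theta> (\<alpha> i) (\<beta> i * \<theta>) $ 0 = 1" by (rule gr_0)
  next
    fix N
    have "(\<Prod>i<N. \<Sum>j\<le>n. gr \<theta> (\<alpha> i) (\<beta> i * \<theta>) $ j) \<le> (\<Prod>i<N. exp (\<beta> i * \<theta> + \<alpha> i * C))"
      unfolding C_def using nn th aA
      by (intro prod_mono conjI sum_nonneg gr_nonneg Sg_bound) auto
    also have "\<dots> = exp (\<Sum>i<N. \<beta> i * \<theta> + \<alpha> i * C)" by (simp add: exp_sum)
    also have "\<dots> \<le> B" unfolding B_def
    proof (rule exp_mono)
      have "(\<Sum>i<N. \<beta> i * \<theta> + \<alpha> i * C) \<le> (\<Sum>i<N. (\<theta> + C) * (\<alpha> i + \<beta> i))"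
        using nn th C0 by (intro sum_mono) (auto simp: algebra_simps intro!: add_mono mult_nonneg_nonneg)
      also have "\<dots> = (\<theta> + C) * (\<Sum>i<N. \<alpha> i + \<beta> i)" by (simp add: sum_distrib_left)
      also have "\<dots> \<le> (\<theta> + C) * suminf (\<lambda>i. \<alpha> i + \<beta> i)"
        using th C0 nn by (intro mult_left_mono sum_le_suminf sm) (auto intro: add_nonneg_nonneg)
      finally show "(\<Sum>i<N. \<beta> i * \<theta> + \<alpha> i * C) \<le> (\<theta> + C) * suminf (\<lambda>i. \<alpha> i + \<beta> i)" .
    qed
    finally show "(\<Prod>i<N. \<Sum>j\<le>n. gr \<theta> (\<alpha> i) (\<beta> i * \<theta>) $ j) \<le> B" .
  qed
qed


definition Le :: "(nat \<Rightarrow>\<^sub>0 nat) \<Rightarrow> (nat \<Rightarrow>\<^sub>0 nat) set" where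
  "Le a = {b. \<forall>j. Poly_Mapping.lookup b j \<le> Poly_Mapping.lookup a j}"

lemma Le_keys: "b \<in> Le a \<Longrightarrow> Poly_Mapping.keys b \<subseteq> Poly_Mapping.keys a"
  unfolding Le_def by (auto simp: in_keys_iff) (metis le_zero_eq not_gr0)

lemma Le_out: "b \<in> Le a \<Longrightarrow> j \<notin> Poly_Mapping.keys a \<Longrightarrow> Poly_Mapping.lookup b j = 0"
  unfolding Le_def by (auto simp: in_keys_iff) (metis le_zero_eq)

lemma Le_bij:
  "bij_betw (\<lambda>b. restrict (Poly_Mapping.lookup b) (Poly_Mapping.keys a)) (Le a)
      (PiE (Poly_Mapping.keys a) (\<lambda>j. {..Poly_Mapping.lookup a j}))"
proof (rule bij_betw_byWitness[where f' = "\<lambda>g. Abs_poly_mapping (\<lambda>j. if j \<in> Poly_Mapping.keys a then g j else 0)"])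
  have fin: "finite {j. (if j \<in> Poly_Mapping.keys a then g j else 0) \<noteq> (0::nat)}" for g
    by (rule finite_subset[of _ "Poly_Mapping.keys a"]) auto
  show "\<forall>b\<in>Le a. Abs_poly_mapping (\<lambda>j. if j \<in> Poly_Mapping.keys a then restrict (Poly_Mapping.lookup b) (Poly_Mapping.keys a) j else 0) = b"
  proof
    fix b assume b: "b \<in> Le a"
    show "Abs_poly_mapping (\<lambda>j. if j \<in> Poly_Mapping.keys a then restrict (Poly_Mapping.lookup b) (Poly_Mapping.keys a) j else 0) = b"
      by (rule poly_mapping_eqI) (auto simp: fin Le_out[OF b])
  qed
  show "\<forall>g\<in>PiE (Poly_Mapping.keys a) (\<lambda>j. {..Poly_Mapping.lookup a j}).
          restrict (Poly_Mapping.lookup (Abs_poly_mapping (\<lambda>j. if j \<in> Poly_Mapping.keys a then g j else 0))) (Poly_Mapping.keys a) = g"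
    by (auto simp: fin PiE_def extensional_def restrict_def)
  show "(\<lambda>b. restrict (Poly_Mapping.lookup b) (Poly_Mapping.keys a)) ` Le a \<subseteq> PiE (Poly_Mapping.keys a) (\<lambda>j. {..Poly_Mapping.lookup a j})"
    by (auto simp: Le_def)
  show "(\<lambda>g. Abs_poly_mapping (\<lambda>j. if j \<in> Poly_Mapping.keys a then g j else 0)) ` PiE (Poly_Mapping.keys a) (\<lambda>j. {..Poly_Mapping.lookup a j}) \<subseteq> Le a"
    by (auto simp: fin Le_def in_keys_iff PiE_def Pi_def)
qed

lemma finite_Le: "finite (Le a)"
  using bij_betw_finite[OF Le_bij[of a]] by (simp add: finite_PiE)

lemma sum_prod_exchange:
  fixes h :: "nat \<Rightarrow> nat \<Rightarrow> 'c::comm_semiring_1"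
  shows "(\<Sum>b\<in>Le a. \<Prod>j\<in>Poly_Mapping.keys a. h j (Poly_Mapping.lookup b j)) =
         (\<Prod>j\<in>Poly_Mapping.keys a. \<Sum>i\<le>Poly_Mapping.lookup a j. h j i)"
proof -
  have "(\<Prod>j\<in>Poly_Mapping.keys a. \<Sum>i\<le>Poly_Mapping.lookup a j. h j i) =
        (\<Sum>g\<in>PiE (Poly_Mapping.keys a) (\<lambda>j. {..Poly_Mapping.lookup a j}). \<Prod>j\<in>Poly_Mapping.keys a. h j (g j))"
    by (rule prod_sum_PiE) auto
  also have "\<dots> = (\<Sum>b\<in>Le a. \<Prod>j\<in>Poly_Mapping.keys a. h j (restrict (Poly_Mapping.lookup b) (Poly_Mapping.keys a) j))"
    by (rule sum.reindex_bij_betw[OF Le_bij, symmetric])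
  also have "\<dots> = (\<Sum>b\<in>Le a. \<Prod>j\<in>Poly_Mapping.keys a. h j (Poly_Mapping.lookup b j))"
    by (intro sum.cong prod.cong refl) auto
  finally show ?thesis by simp
qed

lemma mdeg_Le: "b \<in> Le a \<Longrightarrow> mdeg b = (\<Sum>j\<in>Poly_Mapping.keys a. Poly_Mapping.lookup b j)"
  unfolding mdeg_def by (rule sum.mono_neutral_left) (auto simp: Le_keys in_keys_iff)

lemma prod_Le: "b \<in> Le a \<Longrightarrow> f 0 = 1 \<Longrightarrow>
   (\<Prod>j\<in>Poly_Mapping.keys b. f (Poly_Mapping.lookup b j)) = (\<Prod>j\<in>Poly_Mapping.keys a. f (Poly_Mapping.lookup b j))"
  by (rule prod.mono_neutral_left) (auto simp: Le_keys in_keys_iff)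

lemma minus_Le: "c \<in> Le a \<Longrightarrow> a - c \<in> Le a"
  by (simp add: Le_def lookup_minus)

lemma lookup_minus_nat: "Poly_Mapping.lookup (a - c) j = Poly_Mapping.lookup a j - Poly_Mapping.lookup (c :: nat \<Rightarrow>\<^sub>0 nat) j"
  by (simp add: lookup_minus)

lemma minus_minus_Le: "c \<in> Le a \<Longrightarrow> a - (a - c) = c"
  by (rule poly_mapping_eqI) (auto simp: Le_def lookup_minus)

definition Wf :: "real \<Rightarrow> (nat \<Rightarrow>\<^sub>0 nat) \<Rightarrow> complex" where
  "Wf \<theta> b = (\<Prod>j\<in>Poly_Mapping.keys b. wc \<theta> (Poly_Mapping.lookup b j))"

lemma gk_eq: "gk \<theta> k b = (if mdeg b = k then Wf \<theta> b else 0)"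
  by (simp add: gk_def Wf_def wc_def)



lemma fps_const_prod: "fps_const (\<Prod>i\<in>S. f i) = (\<Prod>i\<in>S. fps_const (f i :: 'a::comm_ring_1))"
  by (induction S rule: infinite_finite_induct) (simp_all add: fps_const_mult[symmetric] del: fps_const_mult)

definition cf :: "complex \<Rightarrow> (nat \<Rightarrow>\<^sub>0 nat) \<Rightarrow> (nat \<Rightarrow>\<^sub>0 nat) \<Rightarrow> complex" where
  "cf \<tau> a b = (\<Prod>j\<in>Poly_Mapping.keys a. of_nat (Poly_Mapping.lookup b j choose (Poly_Mapping.lookup a j - Poly_Mapping.lookup b j))
                            * \<tau> ^ (2 * Poly_Mapping.lookup b j - Poly_Mapping.lookup a j))"

lemma Le_eq: "{b. \<forall>j. Poly_Mapping.lookup b j \<le> Poly_Mapping.lookup a j} = Le a" by (simp add: Le_def)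

lemma LF_eq: "Abs_fps (\<lambda>k. pi_tau \<tau> (gk \<theta> k) a) = (\<Sum>b\<in>Le a. fps_const (Wf \<theta> b * cf \<tau> a b) * fps_X ^ mdeg b)"
proof (rule fps_ext)
  fix k
  show "Abs_fps (\<lambda>k. pi_tau \<tau> (gk \<theta> k) a) $ k = (\<Sum>b\<in>Le a. fps_const (Wf \<theta> b * cf \<tau> a b) * fps_X ^ mdeg b) $ k"
    unfolding fps_sum_nth fps_const_X_power_nth
    by (simp add: pi_tau_def Le_eq gk_eq cf_def[symmetric] cong: sum.cong) (intro sum.cong refl; auto)
qed


lemma LF_comp:
  "(\<Sum>b\<in>Le a. fps_const (Wf \<theta> b * cf \<tau> a b) * fps_X ^ mdeg b) oo Ts \<tau> =
   (\<Prod>j\<in>Poly_Mapping.keys a. \<Sum>i\<le>Poly_Mapping.lookup a j.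
      fps_const (wc \<theta> i * wc \<theta> (Poly_Mapping.lookup a j - i)) * fps_X ^ i * Vs \<tau> ^ (Poly_Mapping.lookup a j - i))"
proof -
  have "(\<Sum>b\<in>Le a. fps_const (Wf \<theta> b * cf \<tau> a b) * fps_X ^ mdeg b) oo Ts \<tau> =
        (\<Sum>b\<in>Le a. fps_const (Wf \<theta> b * cf \<tau> a b) * Ts \<tau> ^ mdeg b)"
    by (simp add: fps_compose_sum_distrib fps_compose_mult_distrib fps_compose_power[symmetric])
  also have "\<dots> = (\<Sum>b\<in>Le a. \<Prod>j\<in>Poly_Mapping.keys a.
       fps_const (wc \<theta> (Poly_Mapping.lookup b j) * of_nat (Poly_Mapping.lookup b j choose (Poly_Mapping.lookup a j - Poly_Mapping.lookup b j))
          * \<tau> ^ (2 * Poly_Mapping.lookup b j - Poly_Mapping.lookup a j)) * Ts \<tau> ^ (Poly_Mapping.lookup b j))"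
  proof (intro sum.cong refl)
    fix b assume b: "b \<in> Le a"
    have W: "Wf \<theta> b = (\<Prod>j\<in>Poly_Mapping.keys a. wc \<theta> (Poly_Mapping.lookup b j))"
      unfolding Wf_def by (rule prod_Le[OF b]) simp
    show "fps_const (Wf \<theta> b * cf \<tau> a b) * Ts \<tau> ^ mdeg b = (\<Prod>j\<in>Poly_Mapping.keys a.
       fps_const (wc \<theta> (Poly_Mapping.lookup b j) * of_nat (Poly_Mapping.lookup b j choose (Poly_Mapping.lookup a j - Poly_Mapping.lookup b j))
          * \<tau> ^ (2 * Poly_Mapping.lookup b j - Poly_Mapping.lookup a j)) * Ts \<tau> ^ (Poly_Mapping.lookup b j))"
      by (simp only: W cf_def mdeg_Le[OF b] power_sum prod.distrib[symmetric] fps_const_prod mult.assoc)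
  qed
  also have "\<dots> = (\<Prod>j\<in>Poly_Mapping.keys a. \<Sum>i\<le>Poly_Mapping.lookup a j.
       fps_const (wc \<theta> i * of_nat (i choose (Poly_Mapping.lookup a j - i)) * \<tau> ^ (2 * i - Poly_Mapping.lookup a j)) * Ts \<tau> ^ i)"
    by (rule sum_prod_exchange)
  also have "\<dots> = (\<Prod>j\<in>Poly_Mapping.keys a. \<Sum>i\<le>Poly_Mapping.lookup a j.
      fps_const (wc \<theta> i * wc \<theta> (Poly_Mapping.lookup a j - i)) * fps_X ^ i * Vs \<tau> ^ (Poly_Mapping.lookup a j - i))"
    by (intro prod.cong refl) (use sv_special[of \<theta> "Poly_Mapping.lookup a _" \<tau>] in \<open>simp add: mult.assoc\<close>)
  finally show ?thesis .
qed


lemma double_delta: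
  fixes F :: "nat \<Rightarrow> nat \<Rightarrow> 'c::comm_semiring_1"
  shows "(\<Sum>m\<le>M. \<Sum>n\<le>M. F m n * ((if p = m then x else 0) * (if q = n then y else 0))) =
         (if p \<le> M \<and> q \<le> M then F p q * x * y else 0)"
proof -
  have inner: "(\<Sum>n\<le>M. F m n * (u * (if q = n then y else 0))) = (if q \<le> M then F m q * u * y else 0)" for m u
  proof -
    have "(\<Sum>n\<le>M. F m n * (u * (if q = n then y else 0))) = (\<Sum>n\<le>M. if q = n then F m q * u * y else 0)"
      by (intro sum.cong refl) (auto simp: mult_ac)
    also have "\<dots> = (if q \<le> M then F m q * u * y else 0)" by (subst sum.delta') auto
    finally show ?thesis .
  qed
  have "(\<Sum>m\<le>M. \<Sum>n\<le>M. F m n * ((if p = m then x else 0) * (if q = n then y else 0))) =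
        (\<Sum>m\<le>M. if p = m then (if q \<le> M then F p q * x * y else 0) else 0)"
    unfolding inner by (intro sum.cong refl) auto
  also have "\<dots> = (if p \<le> M \<and> q \<le> M then F p q * x * y else 0)"
    by (subst sum.delta') auto
  finally show ?thesis .
qed

lemma RF_eq:
  "Abs_fps (\<lambda>k. \<Sum>m\<le>2*k. \<Sum>n\<le>2*k. Kser \<tau> m n $ k * sf_mult (gk \<theta> m) (gk \<theta> n) a) =
   (\<Sum>c\<in>Le a. fps_const (Wf \<theta> c * Wf \<theta> (a - c)) * Kser \<tau> (mdeg c) (mdeg (a - c)))"
proof (rule fps_ext)
  fix k
  have "(\<Sum>m\<le>2*k. \<Sum>n\<le>2*k. Kser \<tau> m n $ k * sf_mult (gk \<theta> m) (gk \<theta> n) a) =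
        (\<Sum>m\<le>2*k. \<Sum>n\<le>2*k. \<Sum>c\<in>Le a. Kser \<tau> m n $ k * (gk \<theta> m c * gk \<theta> n (a - c)))"
    by (simp add: sf_mult_def Le_eq sum_distrib_left)
  also have "\<dots> = (\<Sum>m\<le>2*k. \<Sum>c\<in>Le a. \<Sum>n\<le>2*k. Kser \<tau> m n $ k * (gk \<theta> m c * gk \<theta> n (a - c)))"
    by (intro sum.cong refl) (rule sum.swap)
  also have "\<dots> = (\<Sum>c\<in>Le a. \<Sum>m\<le>2*k. \<Sum>n\<le>2*k. Kser \<tau> m n $ k * (gk \<theta> m c * gk \<theta> n (a - c)))"
    by (rule sum.swap)
  also have "\<dots> = (\<Sum>c\<in>Le a. Kser \<tau> (mdeg c) (mdeg (a - c)) $ k * Wf \<theta> c * Wf \<theta> (a - c))"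
  proof (intro sum.cong refl)
    fix c
    show "(\<Sum>m\<le>2*k. \<Sum>n\<le>2*k. Kser \<tau> m n $ k * (gk \<theta> m c * gk \<theta> n (a - c))) =
          Kser \<tau> (mdeg c) (mdeg (a - c)) $ k * Wf \<theta> c * Wf \<theta> (a - c)"
      unfolding gk_eq double_delta by (auto simp: K_nth_zero)
  qed
  also have "\<dots> = (\<Sum>c\<in>Le a. fps_const (Wf \<theta> c * Wf \<theta> (a - c)) * Kser \<tau> (mdeg c) (mdeg (a - c))) $ k"
    by (simp add: fps_sum_nth mult_ac)
  finally show "Abs_fps (\<lambda>k. \<Sum>m\<le>2*k. \<Sum>n\<le>2*k. Kser \<tau> m n $ k * sf_mult (gk \<theta> m) (gk \<theta> n) a) $ k =
      (\<Sum>c\<in>Le a. fps_const (Wf \<theta> c * Wf \<theta> (a - c)) * Kser \<tau> (mdeg c) (mdeg (a - c))) $ k" by simp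
qed


lemma RF_comp:
  "(\<Sum>c\<in>Le a. fps_const (Wf \<theta> c * Wf \<theta> (a - c)) * Kser \<tau> (mdeg c) (mdeg (a - c))) oo Ts \<tau> =
   (\<Prod>j\<in>Poly_Mapping.keys a. \<Sum>i\<le>Poly_Mapping.lookup a j.
      fps_const (wc \<theta> i * wc \<theta> (Poly_Mapping.lookup a j - i)) * fps_X ^ i * Vs \<tau> ^ (Poly_Mapping.lookup a j - i))"
proof -
  define S where "S = (\<Sum>c\<in>Le a. fps_const (Wf \<theta> c * Wf \<theta> (a - c)) * (fps_X ^ mdeg c * Vs \<tau> ^ mdeg (a - c)))"
  have sw: "(\<Sum>c\<in>Le a. fps_const (Wf \<theta> c * Wf \<theta> (a - c)) * (fps_X ^ mdeg (a - c) * Vs \<tau> ^ mdeg c)) = S"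
    unfolding S_def
    by (rule sum.reindex_bij_witness[of _ "\<lambda>c. a - c" "\<lambda>c. a - c"])
       (auto simp: minus_minus_Le minus_Le mult.commute)
  have "(\<Sum>c\<in>Le a. fps_const (Wf \<theta> c * Wf \<theta> (a - c)) * Kser \<tau> (mdeg c) (mdeg (a - c))) oo Ts \<tau> =
        (\<Sum>c\<in>Le a. fps_const (Wf \<theta> c * Wf \<theta> (a - c)) * (fps_const (1/2) *
            (fps_X ^ mdeg c * Vs \<tau> ^ mdeg (a - c) + fps_X ^ mdeg (a - c) * Vs \<tau> ^ mdeg c)))"
    by (simp add: fps_compose_sum_distrib fps_compose_mult_distrib K_comp)
  also have "\<dots> = (\<Sum>c\<in>Le a. fps_const (1/2) * (fps_const (Wf \<theta> c * Wf \<theta> (a - c)) * (fps_X ^ mdeg c * Vs \<tau> ^ mdeg (a - c))))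
      + (\<Sum>c\<in>Le a. fps_const (1/2) * (fps_const (Wf \<theta> c * Wf \<theta> (a - c)) * (fps_X ^ mdeg (a - c) * Vs \<tau> ^ mdeg c)))"
    unfolding sum.distrib[symmetric] by (intro sum.cong refl) (simp add: algebra_simps)
  also have "\<dots> = fps_const (1/2) * (S + S)"
    unfolding sum_distrib_left[symmetric] sw by (simp add: S_def distrib_left)
  also have "\<dots> = S"
  proof -
    have two: "(2::complex fps) = fps_const 2" by (simp add: numeral_fps_const)
    have "fps_const (1/2) * (2::complex fps) = 1" unfolding two by simp
    then show ?thesis by (metis mult.assoc mult_2 mult_1)
  qed
  also have "S = (\<Sum>c\<in>Le a. \<Prod>j\<in>Poly_Mapping.keys a.
      fps_const (wc \<theta> (Poly_Mapping.lookup c j) * wc \<theta> (Poly_Mapping.lookup a j - Poly_Mapping.lookup c j))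
        * fps_X ^ (Poly_Mapping.lookup c j) * Vs \<tau> ^ (Poly_Mapping.lookup a j - Poly_Mapping.lookup c j))"
    unfolding S_def
  proof (intro sum.cong refl)
    fix c assume c: "c \<in> Le a"
    have ac: "a - c \<in> Le a" by (rule minus_Le[OF c])
    have W1: "Wf \<theta> c = (\<Prod>j\<in>Poly_Mapping.keys a. wc \<theta> (Poly_Mapping.lookup c j))"
      unfolding Wf_def by (rule prod_Le[OF c]) simp
    have W2: "Wf \<theta> (a - c) = (\<Prod>j\<in>Poly_Mapping.keys a. wc \<theta> (Poly_Mapping.lookup a j - Poly_Mapping.lookup c j))"
      unfolding Wf_def prod_Le[OF ac, of "wc \<theta>", simplified] by (simp add: lookup_minus)
    have D2: "mdeg (a - c) = (\<Sum>j\<in>Poly_Mapping.keys a. Poly_Mapping.lookup a j - Poly_Mapping.lookup c j)"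
      unfolding mdeg_Le[OF ac] by (simp add: lookup_minus)
    show "fps_const (Wf \<theta> c * Wf \<theta> (a - c)) * (fps_X ^ mdeg c * Vs \<tau> ^ mdeg (a - c)) =
      (\<Prod>j\<in>Poly_Mapping.keys a. fps_const (wc \<theta> (Poly_Mapping.lookup c j) * wc \<theta> (Poly_Mapping.lookup a j - Poly_Mapping.lookup c j))
        * fps_X ^ (Poly_Mapping.lookup c j) * Vs \<tau> ^ (Poly_Mapping.lookup a j - Poly_Mapping.lookup c j))"
      by (simp only: W1 W2 D2 mdeg_Le[OF c] power_sum prod.distrib[symmetric] fps_const_prod mult.assoc)
  qed
  also have "\<dots> = (\<Prod>j\<in>Poly_Mapping.keys a. \<Sum>i\<le>Poly_Mapping.lookup a j.
      fps_const (wc \<theta> i * wc \<theta> (Poly_Mapping.lookup a j - i)) * fps_X ^ i * Vs \<tau> ^ (Poly_Mapping.lookup a j - i))"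
    by (rule sum_prod_exchange)
  finally show ?thesis .
qed


lemma main_coeff:
  "pi_tau \<tau> (gk \<theta> k) a = (\<Sum>m\<le>2*k. \<Sum>n\<le>2*k. Kser \<tau> m n $ k * sf_mult (gk \<theta> m) (gk \<theta> n) a)"
proof -
  have "Abs_fps (\<lambda>k. pi_tau \<tau> (gk \<theta> k) a) = Abs_fps (\<lambda>k. \<Sum>m\<le>2*k. \<Sum>n\<le>2*k. Kser \<tau> m n $ k * sf_mult (gk \<theta> m) (gk \<theta> n) a)"
  proof (rule comp_T_inj'[where \<tau> = \<tau>])
    show "Abs_fps (\<lambda>k. pi_tau \<tau> (gk \<theta> k) a) oo Ts \<tau> =
      Abs_fps (\<lambda>k. \<Sum>m\<le>2*k. \<Sum>n\<le>2*k. Kser \<tau> m n $ k * sf_mult (gk \<theta> m) (gk \<theta> n) a) oo Ts \<tau>"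
      unfolding LF_eq RF_eq LF_comp RF_comp ..
  qed
  then have "Abs_fps (\<lambda>k. pi_tau \<tau> (gk \<theta> k) a) $ k =
      Abs_fps (\<lambda>k. \<Sum>m\<le>2*k. \<Sum>n\<le>2*k. Kser \<tau> m n $ k * sf_mult (gk \<theta> m) (gk \<theta> n) a) $ k"
    by (rule arg_cong)
  then show ?thesis by (simp only: fps_nth_Abs_fps)
qed



lemma perm_keys:
  assumes "bij \<sigma>" and "\<forall>j. Poly_Mapping.lookup b j = Poly_Mapping.lookup a (\<sigma> j)"
  shows "bij_betw \<sigma> (Poly_Mapping.keys b) (Poly_Mapping.keys a)"
  unfolding bij_betw_def
proof
  show "inj_on \<sigma> (Poly_Mapping.keys b)" using assms(1) by (auto simp: bij_def intro: inj_on_subset)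
  show "\<sigma> ` Poly_Mapping.keys b = Poly_Mapping.keys a"
  proof
    show "\<sigma> ` Poly_Mapping.keys b \<subseteq> Poly_Mapping.keys a" using assms(2) by (auto simp: in_keys_iff)
    show "Poly_Mapping.keys a \<subseteq> \<sigma> ` Poly_Mapping.keys b"
    proof
      fix i assume i: "i \<in> Poly_Mapping.keys a"
      have si: "\<sigma> (inv \<sigma> i) = i" using assms(1) by (simp add: bij_def surj_f_inv_f)
      have "inv \<sigma> i \<in> Poly_Mapping.keys b" using i assms(2) si by (auto simp: in_keys_iff)
      then show "i \<in> \<sigma> ` Poly_Mapping.keys b" using si by (metis image_eqI)
    qed
  qed
qed

lemma mdeg_perm:
  assumes "bij \<sigma>" and "\<forall>j. Poly_Mapping.lookup b j = Poly_Mapping.lookup a (\<sigma> j)"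
  shows "mdeg b = mdeg a"
  unfolding mdeg_def using assms
  by (simp add: sum.reindex_bij_betw[OF perm_keys[OF assms], of "Poly_Mapping.lookup a", symmetric])

lemma Wf_perm:
  assumes "bij \<sigma>" and "\<forall>j. Poly_Mapping.lookup b j = Poly_Mapping.lookup a (\<sigma> j)"
  shows "Wf \<theta> b = Wf \<theta> a"
  unfolding Wf_def using assms
  by (simp add: prod.reindex_bij_betw[OF perm_keys[OF assms], of "\<lambda>i. wc \<theta> (Poly_Mapping.lookup a i)", symmetric])

lemma mdeg_zero_iff: "mdeg a = 0 \<longleftrightarrow> a = 0"
proof
  assume "mdeg a = 0"
  then have "\<forall>j\<in>Poly_Mapping.keys a. Poly_Mapping.lookup a j = 0" unfolding mdeg_def by simp
  then show "a = 0" by (intro poly_mapping_eqI) (auto simp: in_keys_iff)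
qed (simp add: mdeg_def)

lemma gk_zero: "gk \<theta> 0 = sf_one"
  by (rule ext) (simp add: gk_eq mdeg_zero_iff sf_one_def Wf_def)

lemma gk_Lam: "gk \<theta> k \<in> Lam"
proof -
  have "gk \<theta> k b = gk \<theta> k a" if "bij \<sigma>" "\<forall>j. Poly_Mapping.lookup b j = Poly_Mapping.lookup a (\<sigma> j)" for a b \<sigma>
    using mdeg_perm[OF that] Wf_perm[OF that] by (simp add: gk_eq)
  moreover have "\<forall>a. gk \<theta> k a \<noteq> 0 \<longrightarrow> mdeg a \<le> k" by (simp add: gk_eq)
  ultimately show ?thesis unfolding Lam_def sf_symmetric_def by blast
qed

lemma sf_one_Lam: "sf_one \<in> Lam"
  by (metis gk_Lam gk_zero)

lemma zero_Lam: "(\<lambda>a. 0) \<in> Lam"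
  by (simp add: Lam_def sf_symmetric_def)

lemma add_Lam: assumes "f \<in> Lam" "g \<in> Lam" shows "sf_add f g \<in> Lam"
proof -
  from assms obtain d1 d2 where sf: "sf_symmetric f" "sf_symmetric g"
    and d1: "\<forall>a. f a \<noteq> 0 \<longrightarrow> mdeg a \<le> d1" and d2: "\<forall>a. g a \<noteq> 0 \<longrightarrow> mdeg a \<le> d2"
    by (auto simp: Lam_def)
  have "sf_symmetric (sf_add f g)" using sf unfolding sf_symmetric_def sf_add_def by metis
  moreover have "\<forall>a. sf_add f g a \<noteq> 0 \<longrightarrow> mdeg a \<le> max d1 d2"
    using d1 d2 unfolding sf_add_def by (metis add.right_neutral add_0 max.coboundedI1 max.coboundedI2)
  ultimately show ?thesis unfolding Lam_def by blast
qed

lemma scale_Lam: "f \<in> Lam \<Longrightarrow> sf_scale c f \<in> Lam"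
  unfolding Lam_def sf_symmetric_def sf_scale_def by auto

lemma mdeg_split: "c \<in> Le a \<Longrightarrow> mdeg a = mdeg c + mdeg (a - c)"
proof -
  assume c: "c \<in> Le a"
  have "mdeg a = (\<Sum>j\<in>Poly_Mapping.keys a. Poly_Mapping.lookup c j + (Poly_Mapping.lookup a j - Poly_Mapping.lookup c j))"
    unfolding mdeg_def using c by (intro sum.cong refl) (auto simp: Le_def)
  also have "\<dots> = mdeg c + mdeg (a - c)"
    by (simp add: sum.distrib mdeg_Le[OF c] mdeg_Le[OF minus_Le[OF c]] lookup_minus)
  finally show ?thesis .
qed

lemma mult_sym:
  assumes f: "sf_symmetric f" and g: "sf_symmetric g"
  shows "sf_symmetric (sf_mult f g)"
  unfolding sf_symmetric_def
proof (intro allI impI)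
  fix a b :: "nat \<Rightarrow>\<^sub>0 nat" and \<sigma> :: "nat \<Rightarrow> nat"
  assume bij: "bij \<sigma>" and ab: "\<forall>j. Poly_Mapping.lookup b j = Poly_Mapping.lookup a (\<sigma> j)"
  have inj: "inj \<sigma>" and sur: "surj \<sigma>" using bij by (auto simp: bij_def)
  define \<phi> where "\<phi> c = Abs_poly_mapping (\<lambda>i. Poly_Mapping.lookup c (inv \<sigma> i))" for c :: "nat \<Rightarrow>\<^sub>0 nat"
  define \<psi> where "\<psi> c = Abs_poly_mapping (\<lambda>j. Poly_Mapping.lookup c (\<sigma> j))" for c :: "nat \<Rightarrow>\<^sub>0 nat"
  have fin1: "finite {i. Poly_Mapping.lookup c (inv \<sigma> i) \<noteq> 0}" for c :: "nat \<Rightarrow>\<^sub>0 nat"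
  proof -
    have "{i. Poly_Mapping.lookup c (inv \<sigma> i) \<noteq> 0} \<subseteq> \<sigma> ` {j. Poly_Mapping.lookup c j \<noteq> 0}"
      using sur by (auto simp: surj_f_inv_f intro!: image_eqI[where x = "inv \<sigma> _"])
    then show ?thesis by (rule finite_subset) simp
  qed
  have fin2: "finite {j. Poly_Mapping.lookup c (\<sigma> j) \<noteq> 0}" for c :: "nat \<Rightarrow>\<^sub>0 nat"
  proof -
    have e: "{j. Poly_Mapping.lookup c (\<sigma> j) \<noteq> 0} = \<sigma> -` {i. Poly_Mapping.lookup c i \<noteq> 0}" by auto
    show ?thesis by (subst e) (rule finite_vimageI[OF finite_lookup inj])
  qed
  have l\<phi>: "Poly_Mapping.lookup (\<phi> c) i = Poly_Mapping.lookup c (inv \<sigma> i)" for c i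
    unfolding \<phi>_def by (subst lookup_Abs_poly_mapping[OF fin1]) (rule refl)
  have l\<psi>: "Poly_Mapping.lookup (\<psi> c) j = Poly_Mapping.lookup c (\<sigma> j)" for c j
    unfolding \<psi>_def by (subst lookup_Abs_poly_mapping[OF fin2]) (rule refl)
  have is1: "inv \<sigma> (\<sigma> j) = j" for j using inj by simp
  have is2: "\<sigma> (inv \<sigma> i) = i" for i using sur by (simp add: surj_f_inv_f)
  have ba: "Poly_Mapping.lookup a i = Poly_Mapping.lookup b (inv \<sigma> i)" for i using ab is2 by metis
  show "sf_mult f g b = sf_mult f g a"
    unfolding sf_mult_def Le_eq
  proof (rule sum.reindex_bij_witness[where i = \<psi> and j = \<phi>])
    fix c assume c: "c \<in> Le b"
    show "\<psi> (\<phi> c) = c" by (rule poly_mapping_eqI) (simp add: l\<psi> l\<phi> is1)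
    show "\<phi> c \<in> Le a" using c by (simp add: Le_def l\<phi> ba)
    have "f (\<phi> c) = f c" using f bij unfolding sf_symmetric_def by (metis l\<phi> is1)
    moreover have "g (a - \<phi> c) = g (b - c)" using g bij unfolding sf_symmetric_def
      by (metis (no_types, lifting) ab lookup_minus l\<phi> is1)
    ultimately show "f (\<phi> c) * g (a - \<phi> c) = f c * g (b - c)" by simp
  next
    fix c assume c: "c \<in> Le a"
    show "\<phi> (\<psi> c) = c" by (rule poly_mapping_eqI) (simp add: l\<psi> l\<phi> is2)
    show "\<psi> c \<in> Le b" using c by (simp add: Le_def l\<psi> ab)
  qed
qed

lemma mult_Lam: assumes "f \<in> Lam" "g \<in> Lam" shows "sf_mult f g \<in> Lam"
proof -
  from assms obtain d1 d2 where sf: "sf_symmetric f" "sf_symmetric g"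
    and d1: "\<forall>a. f a \<noteq> 0 \<longrightarrow> mdeg a \<le> d1" and d2: "\<forall>a. g a \<noteq> 0 \<longrightarrow> mdeg a \<le> d2"
    by (auto simp: Lam_def)
  have "mdeg a \<le> d1 + d2" if "sf_mult f g a \<noteq> 0" for a
  proof -
    from that obtain c where c: "c \<in> Le a" "f c * g (a - c) \<noteq> 0"
      unfolding sf_mult_def Le_eq by (meson sum.not_neutral_contains_not_neutral)
    then show ?thesis using d1 d2 mdeg_split[OF c(1)] by (metis add_mono mult_not_zero)
  qed
  then show ?thesis using mult_sym[OF sf] by (auto simp: Lam_def)
qed

lemma E_zero: "sf_alg_hom E \<Longrightarrow> E (\<lambda>a. 0) = 0"
proof -
  assume h: "sf_alg_hom E"
  have "(\<lambda>a. 0) = sf_scale 0 sf_one" by (simp add: sf_scale_def)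
  then show ?thesis using h sf_one_Lam by (simp add: sf_alg_hom_def)
qed

lemma E_sum:
  assumes h: "sf_alg_hom E" and fin: "finite S"
  shows "(\<forall>i\<in>S. F i \<in> Lam) \<longrightarrow> ((\<lambda>a. \<Sum>i\<in>S. F i a) \<in> Lam \<and> E (\<lambda>a. \<Sum>i\<in>S. F i a) = (\<Sum>i\<in>S. E (F i)))"
  using fin
proof (induction S rule: finite_induct)
  case empty then show ?case using zero_Lam E_zero[OF h] by simp
next
  case (insert x S)
  have eq: "(\<lambda>a. \<Sum>i\<in>insert x S. F i a) = sf_add (F x) (\<lambda>a. \<Sum>i\<in>S. F i a)"
    using insert by (simp add: sf_add_def)
  show ?case using insert h unfolding eq by (auto simp: add_Lam sf_alg_hom_def)
qed

lemma E_pi_gk: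
  assumes h: "sf_alg_hom E"
  shows "E (pi_tau \<tau> (gk \<theta> k)) = (\<Sum>m\<le>2*k. \<Sum>n\<le>2*k. Kser \<tau> m n $ k * E (gk \<theta> m) * E (gk \<theta> n))"
proof -
  define F where "F p = sf_scale (Kser \<tau> (fst p) (snd p) $ k) (sf_mult (gk \<theta> (fst p)) (gk \<theta> (snd p)))" for p
  have FL: "F p \<in> Lam" for p unfolding F_def by (intro scale_Lam mult_Lam gk_Lam)
  have EF: "E (F p) = Kser \<tau> (fst p) (snd p) $ k * E (gk \<theta> (fst p)) * E (gk \<theta> (snd p))" for p
    using h gk_Lam mult_Lam[OF gk_Lam gk_Lam] unfolding F_def sf_alg_hom_def by simp
  have "pi_tau \<tau> (gk \<theta> k) = (\<lambda>a. \<Sum>p\<in>{..2*k}\<times>{..2*k}. F p a)"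
    by (rule ext) (simp add: main_coeff sum.cartesian_product F_def sf_scale_def case_prod_beta)
  then have "E (pi_tau \<tau> (gk \<theta> k)) = (\<Sum>p\<in>{..2*k}\<times>{..2*k}. E (F p))"
    using E_sum[OF h, of "{..2*k}\<times>{..2*k}" F] FL by simp
  also have "\<dots> = (\<Sum>m\<le>2*k. \<Sum>n\<le>2*k. Kser \<tau> m n $ k * E (gk \<theta> m) * E (gk \<theta> n))"
    by (simp add: EF sum.cartesian_product case_prod_beta)
  finally show ?thesis .
qed


lemma Kser00: "Kser \<tau> 0 0 $ 0 = 1"
  by (simp add: Kser_def)

theorem proposition3p2:
  fixes \<theta> :: real and \<tau> :: complex and \<alpha> \<beta> :: "nat \<Rightarrow> real" and \<gamma> :: real
    and E :: "sfun \<Rightarrow> complex"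
  assumes "\<theta> > 0"
    and "VK_params \<alpha> \<beta> \<gamma>"
    and "is_eps \<theta> \<alpha> \<beta> \<gamma> E"
  defines "F \<equiv> (\<lambda>i. (1 + fps_const (of_real \<theta> * of_real (\<beta> i) * (\<tau> - of_real \<theta> * of_real (\<beta> i))) * fps_X) *
                     fps_one_minus_pow (of_real (\<alpha> i) * (\<tau> + of_real (\<alpha> i))) (- of_real \<theta>))"
  shows "fps_infprod_convergent F \<and>
         Abs_fps (\<lambda>k. if k = 0 then 1 else E (pi_tau \<tau> (gk \<theta> k))) =
           fps_exp (of_real \<gamma> * of_real \<theta> * \<tau>) * fps_infprod F"
proof -
  note th = assms(1) and vk = assms(2)
  from assms(3) have hom: "sf_alg_hom E" and eps:
    "Abs_fps (\<lambda>k. if k = 0 then 1 else E (gk \<theta> k)) =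
       fps_exp (complex_of_real (\<gamma> * \<theta>)) *
       fps_infprod (\<lambda>i. (1 + fps_const (complex_of_real (\<beta> i * \<theta>)) * fps_X) *
                        fps_one_minus_pow (complex_of_real (\<alpha> i)) (- complex_of_real \<theta>))"
    by (auto simp: is_eps_def)
  define f where "f i = (1 + fps_const (complex_of_real (\<beta> i * \<theta>)) * fps_X) *
                        fps_one_minus_pow (complex_of_real (\<alpha> i)) (- complex_of_real \<theta>)" for i
  define \<Phi> where "\<Phi> = Abs_fps (\<lambda>k. if k = 0 then 1 else E (gk \<theta> k))"
  have E1: "E sf_one = 1" using hom by (simp add: sf_alg_hom_def)
  have \<Phi>_nth: "\<Phi> $ m = E (gk \<theta> m)" for m by (simp add: \<Phi>_def gk_zero E1)
  have LHS: "Abs_fps (\<lambda>k. if k = 0 then 1 else E (pi_tau \<tau> (gk \<theta> k))) = Psi \<tau> \<Phi>"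
  proof (rule fps_ext)
    fix k :: nat
    show "Abs_fps (\<lambda>k. if k = 0 then 1 else E (pi_tau \<tau> (gk \<theta> k))) $ k = Psi \<tau> \<Phi> $ k"
    proof (cases "k = 0")
      case True then show ?thesis by (simp add: Psi_nth \<Phi>_nth gk_zero E1 Kser00)
    next
      case False then show ?thesis by (simp add: Psi_nth \<Phi>_nth E_pi_gk[OF hom] mult.assoc)
    qed
  qed
  have fr: "f i = ofr (gr \<theta> (\<alpha> i) (\<beta> i * \<theta>))" for i unfolding f_def by (rule f_eq)
  have Pf: "(\<Prod>i<N. f i) $ n = of_real ((\<Prod>i<N. gr \<theta> (\<alpha> i) (\<beta> i * \<theta>)) $ n)" for N n
    by (simp add: fr ofr_prod[symmetric])
  have convf: "convergent (\<lambda>N. (\<Prod>i<N. f i) $ n)" for n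
    unfolding Pf by (rule convergent_of_real[OF conv_gr[OF th vk]])
  define A where "A = fps_infprod f"
  have A_lim: "(\<lambda>N. (\<Prod>i<N. f i) $ n) \<longlonglongrightarrow> A $ n" for n
    using convf[of n] by (simp add: A_def fps_infprod_def convergent_LIMSEQ_iff)
  have FPsi: "F i = Psi \<tau> (f i)" for i
  proof -
    have "Psi \<tau> (f i) = (1 + fps_const (complex_of_real (\<beta> i * \<theta>) * \<tau> - (complex_of_real (\<beta> i * \<theta>))^2) * fps_X) *
            (Hw \<theta> oo (fps_const (complex_of_real (\<alpha> i) * (\<tau> + complex_of_real (\<alpha> i))) * fps_X))"
      unfolding f_def omp_Hw by (rule Psi_f)
    also have "\<dots> = F i"
      unfolding F_def omp_Hw by (simp add: power2_eq_square algebra_simps)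
    finally show ?thesis by simp
  qed
  have PF: "(\<Prod>i<N. F i) = Psi \<tau> (\<Prod>i<N. f i)" for N
    by (simp add: FPsi Psi_prod)
  have F_lim: "(\<lambda>N. (\<Prod>i<N. F i) $ k) \<longlonglongrightarrow> Psi \<tau> A $ k" for k
    unfolding PF Psi_nth
    by (intro tendsto_sum tendsto_mult tendsto_const A_lim)
  have convF: "fps_infprod_convergent F"
    unfolding fps_infprod_convergent_def using F_lim convergentI by blast
  have infF: "fps_infprod F = Psi \<tau> A"
    by (rule fps_ext) (simp add: fps_infprod_def limI[OF F_lim])
  have "\<Phi> = fps_exp (complex_of_real (\<gamma> * \<theta>)) * A"
    unfolding \<Phi>_def A_def f_def by (rule eps)
  then have "Psi \<tau> \<Phi> = fps_exp (\<tau> * complex_of_real (\<gamma> * \<theta>)) * Psi \<tau> A"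
    by (simp add: Psi_mult Psi_exp)
  also have "\<tau> * complex_of_real (\<gamma> * \<theta>) = of_real \<gamma> * of_real \<theta> * \<tau>" by simp
  finally have "Psi \<tau> \<Phi> = fps_exp (of_real \<gamma> * of_real \<theta> * \<tau>) * fps_infprod F" unfolding infF .
  with LHS convF show ?thesis by simp
qed


end
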